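(* Let $d\ge2$, let $A,B$ be $d$-dimensional systems, let $\Phi=|\phi\rangle\langle\phi|$ with $|\phi\rangle=\frac1{\sqrt d}\sum_{i=1}^d|i\rangle_A|i\rangle_B$, and for $0\le\lambda\le1$ let $\rho_{AB}=\lambda\Phi+\frac{1-\lambda}{d^2-1}(\mathbb I-\Phi)$ (an isotropic state). Then $$Q^A_{\mathcal N}(\rho_{AB})=Q^{AB}_{\mathcal N}(\rho_{AB})=\frac{|\lambda d^2-1|}{2(d+1)}.$$
   Context: The negativity of a bipartite state $\tau_{X:Y}$ is $\mathcal N_{X:Y}(\tau)=(\|\tau^\Gamma\|_1-1)/2$ with $\tau^\Gamma$ the partial transpose on one party and $\|\cdot\|_1$ the trace norm. For a system $S$ of dimension $m$ with orthonormal basis $\{|s_k\rangle\}$, the measurement interaction is the isometry $V_S:S\to S\otimes S'$ ($S'$ $m$-dimensional with computational basis $\{|k\rangle\}$), $V_S|s_k\rangle=|s_k\rangle|k\rangle$. One-sided negativity of quantumness: $Q^A_{\mathcal N}(\rho_{AB})=\min\mathcal N_{AB:A'}\big((V_A\otimes\mathbb I_B)\rho_{AB}(V_A\otimes\mathbb I_B)^\dagger\big)$ over orthonormal bases of $A$. Two-sided: $Q^{AB}_{\mathcal N}(\rho_{AB})=\min\mathcal N_{AB:A'B'}\big((V_A\otimes V_B)\rho_{AB}(V_A\otimes V_B)^\dagger\big)$ over orthonormal bases of $A$ and $B$. *)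

theory Defs
  imports Complex_Main "Jordan_Normal_Form.Char_Poly" "HOL-Computational_Algebra.Polynomial"
begin

text \<open>Conventions. A d-dimensional system has computational basis indexed by 0..d-1.
  A composite system X Y (dims n, m) uses the index x*m + y.
  Matrices are complex JNF matrices.\<close>

definition adj :: "complex mat \<Rightarrow> complex mat" where
  "adj M = mat (dim_col M) (dim_row M) (\<lambda>(i,j). cnj (M $$ (j,i)))"

text \<open>Trace norm = sum of singular values = sum of square roots of the eigenvalues
  (with multiplicity) of adj M * M.\<close>
definition trace_norm :: "complex mat \<Rightarrow> real" where
  "trace_norm M = (\<Sum>z\<in>#proots (char_poly (adj M * M)). sqrt (Re z))"

text \<open>Partial transpose on the second party of a bipartite (n*m)-dimensional matrix.\<close>
definition ptrans :: "nat \<Rightarrow> nat \<Rightarrow> complex mat \<Rightarrow> complex mat" where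
  "ptrans n m M = mat (n*m) (n*m)
     (\<lambda>(r,c). M $$ ((r div m) * m + c mod m, (c div m) * m + r mod m))"

definition negativity :: "nat \<Rightarrow> nat \<Rightarrow> complex mat \<Rightarrow> real" where
  "negativity n m \<tau> = (trace_norm (ptrans n m \<tau>) - 1) / 2"

text \<open>An orthonormal basis of C^d: vectors s_k (k < d) with components u k a (a < d).\<close>
definition onb :: "nat \<Rightarrow> (nat \<Rightarrow> nat \<Rightarrow> complex) \<Rightarrow> bool" where
  "onb d u \<longleftrightarrow> (\<forall>k<d. \<forall>l<d. (\<Sum>a<d. cnj (u k a) * u l a) = (if k = l then 1 else 0))"

text \<open>V_A \<otimes> I_B : A B \<rightarrow> A B A', with V_A |s_k> = |s_k>|k>, output ordered as A B A'
  (index (a*d+b)*d+k), input index x*d+y.\<close>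
definition VA :: "nat \<Rightarrow> (nat \<Rightarrow> nat \<Rightarrow> complex) \<Rightarrow> complex mat" where
  "VA d u = mat (d*d*d) (d*d) (\<lambda>(r,c).
     let a = r div d div d; b = r div d mod d; k = r mod d; x = c div d; y = c mod d in
     u k a * cnj (u k x) * (if b = y then 1 else 0))"

text \<open>V_A \<otimes> V_B : A B \<rightarrow> A B A' B', output index (a*d+b)*(d*d) + (k*d+l).\<close>
definition VAB :: "nat \<Rightarrow> (nat \<Rightarrow> nat \<Rightarrow> complex) \<Rightarrow> (nat \<Rightarrow> nat \<Rightarrow> complex) \<Rightarrow> complex mat" where
  "VAB d u v = mat (d*d*d*d) (d*d) (\<lambda>(r,c).
     let ab = r div (d*d); kl = r mod (d*d);
         a = ab div d; b = ab mod d; k = kl div d; l = kl mod d; x = c div d; y = c mod d in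
     u k a * cnj (u k x) * v l b * cnj (v l y))"

text \<open>One-sided negativity of quantumness: negativity across AB : A'.\<close>
definition Q_A :: "nat \<Rightarrow> complex mat \<Rightarrow> real" where
  "Q_A d \<rho> = (INF u\<in>{u. onb d u}. negativity (d*d) d (VA d u * \<rho> * adj (VA d u)))"

text \<open>Two-sided negativity of quantumness: negativity across AB : A'B'.\<close>
definition Q_AB :: "nat \<Rightarrow> complex mat \<Rightarrow> real" where
  "Q_AB d \<rho> = (INF uv\<in>{(u,v). onb d u \<and> onb d v}.
      negativity (d*d) (d*d) (VAB d (fst uv) (snd uv) * \<rho> * adj (VAB d (fst uv) (snd uv))))"

definition phi :: "nat \<Rightarrow> complex vec" where
  "phi d = vec (d*d) (\<lambda>r. if r div d = r mod d then complex_of_real (1 / sqrt (real d)) else 0)"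

definition Phi :: "nat \<Rightarrow> complex mat" where
  "Phi d = mat (d*d) (d*d) (\<lambda>(r,c). phi d $ r * cnj (phi d $ c))"

definition isotropic :: "nat \<Rightarrow> real \<Rightarrow> complex mat" where
  "isotropic d p = complex_of_real p \<cdot>\<^sub>m Phi d
     + complex_of_real ((1 - p) / (real d ^ 2 - 1)) \<cdot>\<^sub>m (1\<^sub>m (d*d) - Phi d)"

end

theory Submission
  imports Defs
begin

lemma adj_carrier[simp]: "M \<in> carrier_mat n m \<Longrightarrow> adj M \<in> carrier_mat m n"
  by (simp add: adj_def)
lemma adj_dims[simp]: "dim_row (adj M) = dim_col M" "dim_col (adj M) = dim_row M"
  by (simp_all add: adj_def)
lemma adj_index[simp]: "i < dim_col M \<Longrightarrow> j < dim_row M \<Longrightarrow> adj M $$ (i,j) = cnj (M $$ (j,i))"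
  by (simp add: adj_def)
lemma adj_adj[simp]: "adj (adj M) = M"
  by (rule eq_matI) auto
lemma adj_mult: "A \<in> carrier_mat n k \<Longrightarrow> B \<in> carrier_mat k m \<Longrightarrow> adj (A * B) = adj B * adj A"
  by (rule eq_matI) (auto simp: scalar_prod_def mult.commute)


lemma enc_less: "(x::nat) < m \<Longrightarrow> y < d \<Longrightarrow> x*d+y < m*d"
proof -
  assume xy: "x < m" "y < d"
  have "x*d + y < (x+1)*d" using xy by simp
  also have "\<dots> \<le> m*d" using xy by (intro mult_right_mono) auto
  finally show ?thesis .
qed

lemma mod_lt_aux: "(a::nat) < m*d \<Longrightarrow> a mod d < d"
  by (cases d) auto

lemma sum_split: fixes d::nat shows "(\<Sum>r<m*d. f r) = (\<Sum>x<m. \<Sum>y<d. f (x*d+y))"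
proof -
  have "(\<Sum>r<m*d. f r) = (\<Sum>(x,y)\<in>{..<m}\<times>{..<d}. f (x*d+y))"
    by (rule sum.reindex_bij_witness[where i="\<lambda>(x,y). x*d+y" and j="\<lambda>r. (r div d, r mod d)"])
      (auto simp: enc_less mod_lt_aux less_mult_imp_div_less)
  then show ?thesis by (simp add: sum.cartesian_product)
qed

lemma divmod_enc[simp]: "(y::nat) < d \<Longrightarrow> (x*d+y) div d = x" "(y::nat) < d \<Longrightarrow> (x*d+y) mod d = y"
  by simp_all

definition dec3 :: "nat \<Rightarrow> nat \<Rightarrow> nat \<times> nat \<times> nat" where
  "dec3 d r = (r div d div d, r div d mod d, r mod d)"
definition T3 :: "nat \<Rightarrow> (nat \<times> nat \<times> nat) set" where
  "T3 d = {..<d} \<times> {..<d} \<times> {..<d}"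
definition mat3 :: "nat \<Rightarrow> (nat \<times> nat \<times> nat \<Rightarrow> nat \<times> nat \<times> nat \<Rightarrow> complex) \<Rightarrow> complex mat" where
  "mat3 d F = mat (d*d*d) (d*d*d) (\<lambda>(r,c). F (dec3 d r) (dec3 d c))"

lemma dec3_T3: "r < d*d*d \<Longrightarrow> dec3 d r \<in> T3 d"
proof -
  assume r: "r < d*d*d"
  hence d: "d > 0" by (cases d) auto
  have "r div d < d*d" using r d by (simp add: div_less_iff_less_mult)
  hence "r div d div d < d" using d by (simp add: div_less_iff_less_mult)
  thus ?thesis using d by (simp add: dec3_def T3_def)
qed

lemma dec3_inj: "dec3 d r = dec3 d s \<Longrightarrow> r = s"
proof -
  assume "dec3 d r = dec3 d s"
  hence "r div d div d = s div d div d" "r div d mod d = s div d mod d" "r mod d = s mod d"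
    by (auto simp: dec3_def)
  hence "r div d = s div d" by (metis div_mult_mod_eq)
  with \<open>r mod d = s mod d\<close> show "r = s" by (metis div_mult_mod_eq)
qed

lemma dec3_enc[simp]: "b < d \<Longrightarrow> k < d \<Longrightarrow> dec3 d ((a*d+b)*d+k) = (a,b,k)"
  by (simp add: dec3_def)

lemma sum3: "(\<Sum>r<d*d*d. f (dec3 d r)) = (\<Sum>a<d. \<Sum>b<d. \<Sum>k<d. f (a,b,k))"
  by (simp add: sum_split)

lemma mat3_index[simp]: "r < d*d*d \<Longrightarrow> c < d*d*d \<Longrightarrow> mat3 d F $$ (r,c) = F (dec3 d r) (dec3 d c)"
  "dim_row (mat3 d F) = d*d*d" "dim_col (mat3 d F) = d*d*d"
  by (simp_all add: mat3_def)

lemma mat3_carrier[simp]: "mat3 d F \<in> carrier_mat (d*d*d) (d*d*d)" by (simp add: mat3_def)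

lemma mat3_mult: "mat3 d F * mat3 d G = mat3 d (\<lambda>x y. \<Sum>a<d. \<Sum>b<d. \<Sum>k<d. F x (a,b,k) * G (a,b,k) y)"
  by (rule eq_matI) (auto simp: scalar_prod_def atLeast0LessThan sum3[where d=d and f="\<lambda>z. F _ z * G z _"])

lemma adj_mat3: "adj (mat3 d F) = mat3 d (\<lambda>x y. cnj (F y x))"
  by (rule eq_matI) auto

lemma mat3_eq: "(\<And>x y. x \<in> T3 d \<Longrightarrow> y \<in> T3 d \<Longrightarrow> F x y = G x y) \<Longrightarrow> mat3 d F = mat3 d G"
  by (rule eq_matI) (auto simp: dec3_T3)

lemma one_mat3: "1\<^sub>m (d*d*d) = mat3 d (\<lambda>x y. if x = y then 1 else 0)"
  by (rule eq_matI) (auto dest: dec3_inj)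

lemma sum2: "(\<Sum>x<(d::nat)*d. f (x div d) (x mod d)) = (\<Sum>a<d. \<Sum>b<d. f a b)"
  by (subst sum_split) simp

lemma onb_sum: "onb d u \<Longrightarrow> k < d \<Longrightarrow> l < d \<Longrightarrow> (\<Sum>a<d. cnj (u k a) * u l a) = (if k = l then 1 else 0)"
  by (simp add: onb_def)

lemma onb_sum': "onb d u \<Longrightarrow> k < d \<Longrightarrow> l < d \<Longrightarrow> (\<Sum>a<d. u k a * cnj (u l a)) = (if k = l then 1 else 0)"
proof -
  assume *: "onb d u" "k < d" "l < d"
  have "(\<Sum>a<d. u k a * cnj (u l a)) = cnj (\<Sum>a<d. cnj (u k a) * u l a)" by simp
  also have "\<dots> = (if k = l then 1 else 0)" using onb_sum[OF *] by simp
  finally show ?thesis .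
qed

lemma VA_entry: "r < d*d*d \<Longrightarrow> x < d*d \<Longrightarrow> dec3 d r = (a,b,k) \<Longrightarrow>
   VA d u $$ (r,x) = u k a * cnj (u k (x div d)) * (if b = x mod d then 1 else 0)"
  by (simp add: VA_def dec3_def Let_def)

lemma VA_dims[simp]: "dim_row (VA d u) = d*d*d" "dim_col (VA d u) = d*d"
  by (simp_all add: VA_def)

abbreviation tt :: "nat \<Rightarrow> real \<Rightarrow> real" where "tt d p \<equiv> (1 - p) / (real d ^ 2 - 1)"

lemma iso_entry: "x < d*d \<Longrightarrow> y < d*d \<Longrightarrow> d > 0 \<Longrightarrow> isotropic d p $$ (x,y) =
   complex_of_real ((p - tt d p) / d) * (if x div d = x mod d \<and> y div d = y mod d then 1 else 0)
   + complex_of_real (tt d p) * (if x = y then 1 else 0)"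
proof -
  assume xy: "x < d*d" "y < d*d" and d: "d > 0"
  have sq: "complex_of_real (1 / sqrt (real d)) * cnj (complex_of_real (1 / sqrt (real d))) = complex_of_real (1/d)"
    using d by (simp flip: of_real_mult)
  have e: "complex_of_nat d * (complex_of_nat d)^2 - complex_of_nat d = ((complex_of_nat d)^2 - 1) * complex_of_nat d"
    by (simp add: algebra_simps power2_eq_square)
  show ?thesis using xy sq
    by (simp add: isotropic_def Phi_def phi_def of_real_diff[symmetric] algebra_simps diff_divide_distrib)
      (simp add: e add_divide_distrib divide_divide_eq_left)
qed

lemma isotropic_dims[simp]: "dim_row (isotropic d p) = d*d" "dim_col (isotropic d p) = d*d"
  by (simp_all add: isotropic_def Phi_def)

lemma sigmaA:
  assumes u: "onb d u" and d: "d > 0"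
  shows "VA d u * isotropic d p * adj (VA d u) = mat3 d (\<lambda>(a,b,k) (a',b',k').
     complex_of_real ((p - tt d p) / d) * (u k a * cnj (u k b) * cnj (u k' a') * u k' b')
     + complex_of_real (tt d p) * (if k = k' \<and> b = b' then u k a * cnj (u k a') else 0))"
    (is "_ = mat3 d ?S")
proof (rule eq_matI)
  define ga where "ga = complex_of_real ((p - tt d p) / d)"
  define be where "be = complex_of_real (tt d p)"
  define Dg where "Dg x = (if x div d = x mod d then (1::complex) else 0)" for x :: nat
  fix i j assume i: "i < dim_row (mat3 d ?S)" and j: "j < dim_col (mat3 d ?S)"
  hence i': "i < d*d*d" and j': "j < d*d*d" by auto
  obtain a b k where dec: "dec3 d i = (a,b,k)" by (cases "dec3 d i") auto
  obtain a' b' k' where dec': "dec3 d j = (a',b',k')" by (cases "dec3 d j") auto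
  have abk: "a < d" "b < d" "k < d" using dec3_T3[OF i'] dec by (auto simp: T3_def)
  have abk': "a' < d" "b' < d" "k' < d" using dec3_T3[OF j'] dec' by (auto simp: T3_def)
  have VAi: "\<And>x. x < d*d \<Longrightarrow> VA d u $$ (i,x) = u k a * cnj (u k (x div d)) * (if b = x mod d then 1 else 0)"
    using VA_entry[OF i' _ dec] by simp
  have VAj: "\<And>x. x < d*d \<Longrightarrow> VA d u $$ (j,x) = u k' a' * cnj (u k' (x div d)) * (if b' = x mod d then 1 else 0)"
    using VA_entry[OF j' _ dec'] by simp
  have S1: "(\<Sum>x<d*d. VA d u $$ (i,x) * Dg x) = u k a * cnj (u k b)"
  proof -
    have "(\<Sum>x<d*d. VA d u $$ (i,x) * Dg x) = (\<Sum>x<d*d. (\<lambda>x1 x2. u k a * cnj (u k x1) * (if b = x2 then 1 else 0) * (if x1 = x2 then 1 else 0)) (x div d) (x mod d))"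
      by (intro sum.cong) (simp_all add: VAi Dg_def)
    also have "\<dots> = (\<Sum>x1<d. \<Sum>x2<d. u k a * cnj (u k x1) * (if b = x2 then 1 else 0) * (if x1 = x2 then 1 else 0))"
      by (rule sum2)
    also have "\<dots> = u k a * cnj (u k b)" using abk
      by (simp add: if_distrib[of "\<lambda>x. _ * x"] sum.delta sum.delta' cong: if_cong)
    finally show ?thesis .
  qed
  have R: "(VA d u * isotropic d p) $$ (i,y) = ga * Dg y * (u k a * cnj (u k b)) + be * VA d u $$ (i,y)"
    if y: "y < d*d" for y
  proof -
    have "(VA d u * isotropic d p) $$ (i,y) = (\<Sum>x<d*d. VA d u $$ (i,x) * isotropic d p $$ (x,y))"
      using i' y by (simp add: scalar_prod_def atLeast0LessThan)
    also have "\<dots> = (\<Sum>x<d*d. ga * Dg y * (VA d u $$ (i,x) * Dg x) + (if x = y then be * VA d u $$ (i,y) else 0))"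
      using y d by (intro sum.cong) (auto simp: iso_entry Dg_def ga_def be_def algebra_simps)
    also have "\<dots> = ga * Dg y * (\<Sum>x<d*d. VA d u $$ (i,x) * Dg x) + be * VA d u $$ (i,y)"
      using y by (simp add: sum.distrib sum_distrib_left)
    finally show ?thesis using S1 by simp
  qed
  have S2: "(\<Sum>y<d*d. Dg y * cnj (VA d u $$ (j,y))) = cnj (u k' a') * u k' b'"
  proof -
    have "(\<Sum>y<d*d. Dg y * cnj (VA d u $$ (j,y))) = (\<Sum>y<d*d. (\<lambda>x1 x2. cnj (u k' a') * u k' x1 * (if b' = x2 then 1 else 0) * (if x1 = x2 then 1 else 0)) (y div d) (y mod d))"
      by (intro sum.cong) (simp_all add: VAj Dg_def)
    also have "\<dots> = (\<Sum>x1<d. \<Sum>x2<d. cnj (u k' a') * u k' x1 * (if b' = x2 then 1 else 0) * (if x1 = x2 then 1 else 0))"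
      by (rule sum2)
    also have "\<dots> = cnj (u k' a') * u k' b'" using abk'
      by (simp add: if_distrib[of "\<lambda>x. _ * x"] sum.delta sum.delta' cong: if_cong)
    finally show ?thesis .
  qed
  have S3: "(\<Sum>y<d*d. VA d u $$ (i,y) * cnj (VA d u $$ (j,y))) = (if k = k' \<and> b = b' then u k a * cnj (u k a') else 0)"
  proof -
    have "(\<Sum>y<d*d. VA d u $$ (i,y) * cnj (VA d u $$ (j,y))) = (\<Sum>y<d*d. (\<lambda>x1 x2. u k a * cnj (u k x1) * (if b = x2 then 1 else 0) * (cnj (u k' a') * u k' x1 * (if b' = x2 then 1 else 0))) (y div d) (y mod d))"
      by (intro sum.cong) (simp_all add: VAi VAj)
    also have "\<dots> = (\<Sum>x1<d. \<Sum>x2<d. u k a * cnj (u k x1) * (if b = x2 then 1 else 0) * (cnj (u k' a') * u k' x1 * (if b' = x2 then 1 else 0)))"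
      by (rule sum2)
    also have "\<dots> = (if b = b' then u k a * cnj (u k' a') * (\<Sum>x1<d. cnj (u k x1) * u k' x1) else 0)"
      using abk by (cases "b = b'") (simp_all add: if_distrib[of "\<lambda>x. _ * x"] sum.delta sum.delta' sum_distrib_left mult_ac cong: if_cong)
    also have "\<dots> = (if k = k' \<and> b = b' then u k a * cnj (u k a') else 0)"
      using onb_sum[OF u abk(3) abk'(3)] by auto
    finally show ?thesis .
  qed
  have "(VA d u * isotropic d p * adj (VA d u)) $$ (i,j) = (\<Sum>y<d*d. (VA d u * isotropic d p) $$ (i,y) * adj (VA d u) $$ (y,j))"
    using i' j' by (simp add: scalar_prod_def atLeast0LessThan)
  also have "\<dots> = (\<Sum>y<d*d. ga * (u k a * cnj (u k b)) * (Dg y * cnj (VA d u $$ (j,y))) + be * (VA d u $$ (i,y) * cnj (VA d u $$ (j,y))))"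
    using j' by (intro sum.cong) (auto simp: R algebra_simps)
  also have "\<dots> = ga * (u k a * cnj (u k b)) * (cnj (u k' a') * u k' b') + be * (if k = k' \<and> b = b' then u k a * cnj (u k a') else 0)"
    by (simp add: sum.distrib sum_distrib_left[symmetric] S2 S3)
  also have "\<dots> = mat3 d ?S $$ (i,j)" using i' j' dec dec' by (simp add: ga_def be_def mult_ac)
  finally show "(VA d u * isotropic d p * adj (VA d u)) $$ (i,j) = mat3 d ?S $$ (i,j)" .
qed auto


lemma sum_prod2: "(\<Sum>a<d. \<Sum>b<(e::nat). f a * (g b :: complex)) = (\<Sum>a<d. f a) * (\<Sum>b<e. g b)"
  by (simp add: sum_product)

lemmas ifs = if_distrib[of "\<lambda>x. _ * x"] if_distrib[of "\<lambda>x. x * _"] if_distrib[of cnj] sum.delta sum.delta'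

lemma ptrans_mat3: "d > 0 \<Longrightarrow> ptrans (d*d) d (mat3 d F) = mat3 d (\<lambda>(a,b,k) (a',b',k'). F (a,b,k') (a',b',k))"
proof (rule eq_matI)
  fix i j assume d: "d > 0" and i: "i < dim_row (mat3 d (\<lambda>(a,b,k) (a',b',k'). F (a,b,k') (a',b',k)))"
    and j: "j < dim_col (mat3 d (\<lambda>(a,b,k) (a',b',k'). F (a,b,k') (a',b',k)))"
  hence i': "i < d*d*d" and j': "j < d*d*d" by auto
  have l1: "i div d * d + j mod d < d*d*d"
    using i' d by (intro enc_less) (auto simp: less_mult_imp_div_less)
  have l2: "j div d * d + i mod d < d*d*d"
    using j' d by (intro enc_less) (auto simp: less_mult_imp_div_less)
  show "ptrans (d*d) d (mat3 d F) $$ (i,j) = mat3 d (\<lambda>(a,b,k) (a',b',k'). F (a,b,k') (a',b',k)) $$ (i,j)"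
    using i' j' l1 l2 d by (simp add: ptrans_def dec3_def)
qed (auto simp: ptrans_def)


definition W3 :: "nat \<Rightarrow> (nat \<Rightarrow> nat \<Rightarrow> complex) \<Rightarrow> complex mat" where
  "W3 d u = mat3 d (\<lambda>(a,b,k) (i,j,m). u i a * cnj (u j b) * (if m = k then 1 else 0))"

lemma W3_unitary: assumes u: "onb d u" shows "adj (W3 d u) * W3 d u = 1\<^sub>m (d*d*d)"
  unfolding W3_def adj_mat3 mat3_mult one_mat3
proof (rule mat3_eq, goal_cases)
  case (1 x y)
  obtain i j m where xx: "x = (i,j,m)" "i < d" "j < d" "m < d" using 1 by (auto simp: T3_def)
  obtain i' j' m' where yy: "y = (i',j',m')" "i' < d" "j' < d" "m' < d" using 1 by (auto simp: T3_def)
  show ?case (is "?L = ?R")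
  proof -
    have "?L = (\<Sum>a<d. \<Sum>b<d. (cnj (u i a) * u i' a) * (u j b * cnj (u j' b)) * (if m = m' then 1 else 0))"
      using xx yy by (cases "m = m'") (simp_all add: if_distrib[of "\<lambda>x. _ * x"] if_distrib[of "\<lambda>x. x * _"] if_distrib[of cnj] sum.delta sum.delta' mult_ac cong: if_cong)
    also have "\<dots> = (\<Sum>a<d. cnj (u i a) * u i' a) * (\<Sum>b<d. u j b * cnj (u j' b)) * (if m = m' then 1 else 0)"
      by (cases "m = m'") (simp_all add: sum_prod2)
    also have "\<dots> = ?R"
      using xx yy onb_sum[OF u xx(2) yy(2)] onb_sum'[OF u xx(3) yy(3)] by auto
    finally show ?thesis .
  qed
qed


lemma innerA:
  assumes u: "onb d u" and lt: "i < d" "j < d" "m < d" "a' < d" "b' < d" "k' < d"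
  shows "(\<Sum>a<d. \<Sum>b<d. \<Sum>k<d. cnj (u i a * cnj (u j b) * (if m = k then 1 else 0)) *
      (ga * (u k' a * cnj (u k' b) * cnj (u k a') * u k b') + be * (if k' = k \<and> b = b' then u k' a * cnj (u k' a') else 0)))
    = ga * (if i = k' \<and> j = k' then cnj (u m a') * u m b' else 0) + be * (if k' = m \<and> i = m then cnj (u m a') * u j b' else 0)"
proof -
  have "(\<Sum>a<d. \<Sum>b<d. \<Sum>k<d. cnj (u i a * cnj (u j b) * (if m = k then 1 else 0)) *
      (ga * (u k' a * cnj (u k' b) * cnj (u k a') * u k b') + be * (if k' = k \<and> b = b' then u k' a * cnj (u k' a') else 0)))
    = (\<Sum>a<d. \<Sum>b<d. cnj (u i a) * u j b * (ga * (u k' a * cnj (u k' b) * cnj (u m a') * u m b') + be * (if k' = m \<and> b = b' then u k' a * cnj (u k' a') else 0)))"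
    using lt by (simp add: ifs mult_ac cong: if_cong)
  also have "\<dots> = ga * (cnj (u m a') * u m b') * (\<Sum>a<d. \<Sum>b<d. (cnj (u i a) * u k' a) * (u j b * cnj (u k' b)))
      + be * (\<Sum>a<d. \<Sum>b<d. (if k' = m \<and> b = b' then cnj (u i a) * u j b * u k' a * cnj (u k' a') else 0))"
    by (simp add: sum.distrib sum_distrib_left algebra_simps ifs cong: if_cong)
  also have "\<dots> = ga * (cnj (u m a') * u m b') * ((\<Sum>a<d. cnj (u i a) * u k' a) * (\<Sum>b<d. u j b * cnj (u k' b)))
      + be * (if k' = m then u j b' * cnj (u k' a') * (\<Sum>a<d. cnj (u i a) * u k' a) else 0)"
    using lt by (cases "k' = m") (simp_all add: sum_prod2 ifs sum_distrib_left mult_ac cong: if_cong)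
  also have "\<dots> = ga * (if i = k' \<and> j = k' then cnj (u m a') * u m b' else 0) + be * (if k' = m \<and> i = m then cnj (u m a') * u j b' else 0)"
    using onb_sum[OF u lt(1) lt(6)] onb_sum'[OF u lt(2) lt(6)] by auto
  finally show ?thesis .
qed

lemma outerA:
  assumes u: "onb d u" and lt: "i < d" "j < d" "m < d" "i' < d" "j' < d" "m' < d"
  shows "(\<Sum>a'<d. \<Sum>b'<d. \<Sum>k'<d. (ga * (if i = k' \<and> j = k' then cnj (u m a') * u m b' else 0) + be * (if k' = m \<and> i = m then cnj (u m a') * u j b' else 0))
      * (u i' a' * cnj (u j' b') * (if m' = k' then 1 else 0)))
    = ga * (if i = m' \<and> j = m' \<and> i' = m \<and> j' = m then 1 else 0) + be * (if m = m' \<and> i = m \<and> i' = m \<and> j = j' then 1 else 0)"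
proof -
  define c1 where "c1 \<longleftrightarrow> i = m' \<and> j = m'"
  define c2 where "c2 \<longleftrightarrow> m' = m \<and> i = m"
  have "(\<Sum>a'<d. \<Sum>b'<d. \<Sum>k'<d. (ga * (if i = k' \<and> j = k' then cnj (u m a') * u m b' else 0) + be * (if k' = m \<and> i = m then cnj (u m a') * u j b' else 0))
      * (u i' a' * cnj (u j' b') * (if m' = k' then 1 else 0)))
    = (\<Sum>a'<d. \<Sum>b'<d. (ga * (if c1 then cnj (u m a') * u m b' else 0) + be * (if c2 then cnj (u m a') * u j b' else 0))
      * (u i' a' * cnj (u j' b')))"
    using lt unfolding c1_def c2_def by (simp add: ifs cong: if_cong)
  also have "\<dots> = ga * (if c1 then (\<Sum>a'<d. \<Sum>b'<d. (cnj (u m a') * u i' a') * (u m b' * cnj (u j' b'))) else 0)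
     + be * (if c2 then (\<Sum>a'<d. \<Sum>b'<d. (cnj (u m a') * u i' a') * (u j b' * cnj (u j' b'))) else 0)"
    by (cases c1; cases c2)
      (simp_all add: sum_distrib_left sum.distrib distrib_left distrib_right mult_ac)
  also have "\<dots> = ga * (if i = m' \<and> j = m' \<and> i' = m \<and> j' = m then 1 else 0) + be * (if m = m' \<and> i = m \<and> i' = m \<and> j = j' then 1 else 0)"
    unfolding sum_prod2 c1_def c2_def onb_sum[OF u lt(3) lt(4)] onb_sum'[OF u lt(3) lt(5)] onb_sum'[OF u lt(2) lt(5)]
    by (cases "i = m'"; cases "j = m'"; cases "m = i'"; cases "m = j'"; cases "m' = m"; cases "i = m"; cases "j = j'")
      (simp_all only: if_True if_False simp_thms mult_1_right mult_zero_left mult_zero_right add_0_right add_0_left, auto)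
  finally show ?thesis .
qed


lemma proots_lin_prod: "proots (\<Prod>a\<leftarrow>xs. [:- a, 1::complex:]) = mset xs"
proof (induction xs)
  case (Cons x xs)
  have "(\<Prod>a\<leftarrow>xs. [:- a, 1::complex:]) \<noteq> 0" by (auto simp add: prod_list_zero_iff)
  have "proots ([:- x, 1:] * (\<Prod>a\<leftarrow>xs. [:- a, 1::complex:])) = proots [:- x, 1:] + proots (\<Prod>a\<leftarrow>xs. [:- a, 1::complex:])"
    by (rule proots_mult) (use \<open>_ \<noteq> 0\<close> in auto)
  thus ?case using Cons by simp
qed simp

lemma sum_mset_upt: "(\<Sum>z\<in>#mset (map f [0..<n]). g z) = (\<Sum>r<n. g (f r))"
  by (induction n) (auto simp: add.commute)

lemma trace_norm_diag:
  fixes M W :: "complex mat" and c :: "nat \<Rightarrow> real"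
  assumes M: "M \<in> carrier_mat n n" and W: "W \<in> carrier_mat n n"
    and WW: "adj W * W = 1\<^sub>m n"
    and D: "adj (adj W * M * W) * (adj W * M * W) = mat n n (\<lambda>(r,s). if r = s then complex_of_real ((c r)^2) else 0)"
    and c: "\<And>r. r < n \<Longrightarrow> c r \<ge> 0"
  shows "trace_norm M = (\<Sum>r<n. c r)"
proof -
  define M' where "M' = adj W * M * W"
  define DD where "DD = mat n n (\<lambda>(r,s). if r = s then complex_of_real ((c r)^2) else 0)"
  have aW: "adj W \<in> carrier_mat n n" using W by simp
  have WW': "W * adj W = 1\<^sub>m n" using mat_mult_left_right_inverse[OF aW W WW] .
  have cc: "\<And>X Y. X \<in> carrier_mat n n \<Longrightarrow> Y \<in> carrier_mat n n \<Longrightarrow> X * Y \<in> carrier_mat n n"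
    by (meson mult_carrier_mat)
  note as = assoc_mult_mat[of _ n n _ n _ n]
  have M'c: "M' \<in> carrier_mat n n" using M W aW unfolding M'_def by (meson mult_carrier_mat)
  have "W * M' * adj W = (W * adj W) * M * (W * adj W)"
    unfolding M'_def using M W aW by (simp add: as cc)
  also have "\<dots> = M" using WW' M by simp
  finally have MM: "M = W * M' * adj W" by simp
  have "adj M = W * adj M' * adj W"
    unfolding MM using W aW M'c by (simp add: adj_mult[of _ n n _ n] as cc)
  hence "adj M * M = W * adj M' * adj W * (W * M' * adj W)" using MM by simp
  also have "\<dots> = W * (adj M' * M') * adj W"
  proof -
    have "W * adj M' * adj W * (W * M' * adj W) = W * adj M' * (adj W * W) * M' * adj W"
      using W aW M'c by (simp add: as cc)
    also have "\<dots> = W * (adj M' * M') * adj W"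
      using W aW M'c WW by (simp add: as cc)
    finally show ?thesis .
  qed
  finally have AM: "adj M * M = W * DD * adj W" using D unfolding M'_def DD_def by simp
  have DDc: "DD \<in> carrier_mat n n" by (simp add: DD_def)
  have sim: "similar_mat (adj M * M) DD"
    by (rule similar_matI[where n=n and P=W and Q="adj W"]) (use AM W aW WW WW' DDc M in \<open>auto simp: as\<close>)
  have ut: "upper_triangular DD" unfolding DD_def upper_triangular_def by auto
  have cp: "char_poly (adj M * M) = (\<Prod>a\<leftarrow>diag_mat DD. [:- a, 1:])"
    using char_poly_similar[OF sim] char_poly_upper_triangular[OF DDc ut] by simp
  have dg: "diag_mat DD = map (\<lambda>r. complex_of_real ((c r)^2)) [0..<n]"
    unfolding DD_def diag_mat_def by (rule nth_equalityI) auto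
  have pr: "proots (char_poly (adj M * M)) = mset (map (\<lambda>r. complex_of_real ((c r)^2)) [0..<n])"
    unfolding cp dg
    by (rule proots_lin_prod)
  show ?thesis
    unfolding trace_norm_def pr sum_mset_upt using c
    by (intro sum.cong) auto
qed

lemma MpA:
  assumes u: "onb d u" and d: "d > 0"
  shows "adj (W3 d u) * ptrans (d*d) d (VA d u * isotropic d p * adj (VA d u)) * W3 d u
    = mat3 d (\<lambda>(i,j,m) (i',j',m'). complex_of_real ((p - tt d p) / d) * (if i = m' \<and> j = m' \<and> i' = m \<and> j' = m then 1 else 0)
          + complex_of_real (tt d p) * (if m = m' \<and> i = m \<and> i' = m \<and> j = j' then 1 else 0))"
  unfolding sigmaA[OF u d] ptrans_mat3[OF d] W3_def adj_mat3 mat3_mult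
proof (rule mat3_eq, goal_cases)
  case (1 x y)
  obtain i j m where xx: "x = (i,j,m)" "i < d" "j < d" "m < d" using 1 by (auto simp: T3_def)
  obtain i' j' m' where yy: "y = (i',j',m')" "i' < d" "j' < d" "m' < d" using 1 by (auto simp: T3_def)
  let ?ga = "complex_of_real ((p - tt d p) / d)" and ?be = "complex_of_real (tt d p)"
  show ?case (is "?L = ?R")
  proof -
    have "?L = (\<Sum>a'<d. \<Sum>b'<d. \<Sum>k'<d. (?ga * (if i = k' \<and> j = k' then cnj (u m a') * u m b' else 0) + ?be * (if k' = m \<and> i = m then cnj (u m a') * u j b' else 0))
      * (u i' a' * cnj (u j' b') * (if m' = k' then 1 else 0)))"
      unfolding xx yy prod.case
      by (intro sum.cong refl arg_cong2[where f="(*)"] innerA[OF u]) (use xx in auto)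
    also have "\<dots> = ?R"
      unfolding xx yy prod.case by (rule outerA[OF u]) (use xx yy in auto)
    finally show ?thesis .
  qed
qed


lemma sum3_T3: "(\<Sum>a<d. \<Sum>b<d. \<Sum>k<d. f (a,b,k)) = (\<Sum>q\<in>T3 d. f q)"
  unfolding T3_def by (simp add: sum.cartesian_product)

lemma delta_prod: "finite S \<Longrightarrow> c1 \<in> S \<Longrightarrow>
  (\<Sum>q\<in>S. (if q = c1 \<and> P then (a::complex) else 0) * (if q = c2 \<and> Q then b else 0)) = (if c1 = c2 \<and> P \<and> Q then a * b else 0)"
proof -
  assume S: "finite S" "c1 \<in> S"
  have "(\<Sum>q\<in>S. (if q = c1 \<and> P then (a::complex) else 0) * (if q = c2 \<and> Q then b else 0))
     = (\<Sum>q\<in>S. if q = c1 then (if c1 = c2 \<and> P \<and> Q then a * b else 0) else 0)"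
    by (intro sum.cong) auto
  also have "\<dots> = (if c1 = c2 \<and> P \<and> Q then a * b else 0)" using S by simp
  finally show ?thesis .
qed

definition MpAf :: "complex \<Rightarrow> complex \<Rightarrow> nat \<times> nat \<times> nat \<Rightarrow> nat \<times> nat \<times> nat \<Rightarrow> complex" where
  "MpAf g b = (\<lambda>(i,j,m) (i',j',m'). g * (if i = m' \<and> j = m' \<and> i' = m \<and> j' = m then 1 else 0)
          + b * (if m = m' \<and> i = m \<and> i' = m \<and> j = j' then 1 else 0))"

lemma MpAf_alt: "MpAf g b q (i,j,m) = (if q = (m,m,i) \<and> i = j then g else 0) + (if q = (i,j,i) \<and> i = m then b else 0)"
proof -
  obtain i0 j0 m0 where q: "q = (i0,j0,m0)" by (cases q) auto
  have c1: "(i0 = m \<and> j0 = m \<and> i = m0 \<and> j = m0) = ((i0,j0,m0) = (m,m,i) \<and> i = j)" by auto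
  have c2: "(m0 = m \<and> i0 = m0 \<and> i = m0 \<and> j0 = j) = ((i0,j0,m0) = (i,j,i) \<and> i = m)" by auto
  have gen: "\<And>P Q. g * (if P then 1 else 0) + b * (if Q then 1 else 0) = (if P then g else 0) + (if Q then b else 0)"
    by simp
  show ?thesis unfolding q MpAf_def prod.case c1 c2 by (rule gen)
qed

lemma gen4: "cnj ((if P1 then complex_of_real g else 0) + (if Q1 then complex_of_real b else 0)) *
    ((if P2 then complex_of_real g else 0) + (if Q2 then complex_of_real b else 0))
  = (if P1 then complex_of_real g else 0) * (if P2 then complex_of_real g else 0)
   + (if P1 then complex_of_real g else 0) * (if Q2 then complex_of_real b else 0)
   + (if Q1 then complex_of_real b else 0) * (if P2 then complex_of_real g else 0)
   + (if Q1 then complex_of_real b else 0) * (if Q2 then complex_of_real b else 0)"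
  by (cases P1; cases Q1; cases P2; cases Q2) (simp_all add: algebra_simps)

lemma gen5: "(if P then complex_of_real g * complex_of_real g else 0) + (if P \<and> Q then complex_of_real g * complex_of_real b else 0)
   + (if P \<and> Q then complex_of_real b * complex_of_real g else 0) + (if Q then complex_of_real b * complex_of_real b else 0)
   = complex_of_real ((g * (if P then 1 else 0) + b * (if Q then 1 else 0))^2)"
  by (cases P; cases Q) (simp_all add: power2_eq_square algebra_simps)

lemma MpA_sq:
  fixes g b :: real
  shows "adj (mat3 d (MpAf g b)) * mat3 d (MpAf g b) =
    mat3 d (\<lambda>(i,j,m) y. if (i,j,m) = y then complex_of_real ((g * (if i = j then 1 else 0) + b * (if i = m then 1 else 0))^2) else 0)"
  unfolding adj_mat3 mat3_mult
proof (rule mat3_eq, goal_cases)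
  case (1 x y)
  obtain i j m where xx: "x = (i,j,m)" "i < d" "j < d" "m < d" using 1 by (auto simp: T3_def)
  obtain i' j' m' where yy: "y = (i',j',m')" "i' < d" "j' < d" "m' < d" using 1 by (auto simp: T3_def)
  have fin: "finite (T3 d)" by (simp add: T3_def)
  have in1: "(m,m,i) \<in> T3 d" "(i,j,i) \<in> T3 d" using xx by (auto simp: T3_def)
  let ?g = "complex_of_real g" and ?b = "complex_of_real b"
  have "(\<Sum>a<d. \<Sum>b'<d. \<Sum>k<d. cnj (MpAf ?g ?b (a, b', k) x) * MpAf ?g ?b (a, b', k) y)
     = (\<Sum>q\<in>T3 d. cnj (MpAf ?g ?b q x) * MpAf ?g ?b q y)"
    by (rule sum3_T3)
  also have "\<dots> = (\<Sum>q\<in>T3 d. (if q = (m,m,i) \<and> i = j then ?g else 0) * (if q = (m',m',i') \<and> i' = j' then ?g else 0)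
       + (if q = (m,m,i) \<and> i = j then ?g else 0) * (if q = (i',j',i') \<and> i' = m' then ?b else 0)
       + (if q = (i,j,i) \<and> i = m then ?b else 0) * (if q = (m',m',i') \<and> i' = j' then ?g else 0)
       + (if q = (i,j,i) \<and> i = m then ?b else 0) * (if q = (i',j',i') \<and> i' = m' then ?b else 0))"
    unfolding xx yy MpAf_alt by (intro sum.cong refl gen4)
  also have "\<dots> = (if (m,m,i) = (m',m',i') \<and> i = j \<and> i' = j' then ?g * ?g else 0)
     + (if (m,m,i) = (i',j',i') \<and> i = j \<and> i' = m' then ?g * ?b else 0)
     + (if (i,j,i) = (m',m',i') \<and> i = m \<and> i' = j' then ?b * ?g else 0)
     + (if (i,j,i) = (i',j',i') \<and> i = m \<and> i' = m' then ?b * ?b else 0)"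
    by (simp only: sum.distrib delta_prod[OF fin in1(1)] delta_prod[OF fin in1(2)])
  also have "\<dots> = (case x of (i,j,m) \<Rightarrow> \<lambda>y. if (i,j,m) = y then complex_of_real ((g * (if i = j then 1 else 0) + b * (if i = m then 1 else 0))^2) else 0) y"
  proof (cases "x = y")
    case True
    hence e: "i' = i" "j' = j" "m' = m" using xx yy by auto
    have c1: "((m,m,i) = (m,m,i) \<and> i = j \<and> i = j) = (i = j)" by auto
    have c2: "((m,m,i) = (i,j,i) \<and> i = j \<and> i = m) = (i = j \<and> i = m)" by auto
    have c3: "((i,j,i) = (m,m,i) \<and> i = m \<and> i = j) = (i = j \<and> i = m)" by auto
    have c4: "((i,j,i) = (i,j,i) \<and> i = m \<and> i = m) = (i = m)" by auto
    show ?thesis unfolding e xx yy c1 c2 c3 c4 prod.case if_True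
      by (subst if_P[OF refl]) (rule gen5)
  next
    case False
    have n: "((m,m,i) = (m',m',i') \<and> i = j \<and> i' = j') = False" "((m,m,i) = (i',j',i') \<and> i = j \<and> i' = m') = False"
      "((i,j,i) = (m',m',i') \<and> i = m \<and> i' = j') = False" "((i,j,i) = (i',j',i') \<and> i = m \<and> i' = m') = False"
      "((i,j,m) = (i',j',m')) = False"
      using xx yy False by auto
    show ?thesis unfolding xx yy prod.case n if_False by simp
  qed
  finally show ?case .
qed

lemma mat3_diag: "mat3 d (\<lambda>x y. if x = y then complex_of_real (h x) else 0)
   = mat (d*d*d) (d*d*d) (\<lambda>(r,s). if r = s then complex_of_real (h (dec3 d r)) else 0)"
  by (rule eq_matI) (auto dest: dec3_inj)

lemma sum_ind: "(i::nat) < d \<Longrightarrow> (\<Sum>m<d. F (if i = m then 1 else 0)) = F 1 + (real d - 1) * F (0::real)"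
proof -
  assume i: "i < d"
  have "(\<Sum>m<d. F (if i = m then 1 else 0)) = (\<Sum>m<d. F 0 + (if m = i then F 1 - F 0 else 0))"
    by (intro sum.cong) auto
  also have "\<dots> = real d * F 0 + (F 1 - F 0)" using i by (simp add: sum.distrib)
  finally show ?thesis by (simp add: algebra_simps)
qed

lemma traceA_sum: "(\<Sum>a<d. \<Sum>b<d. \<Sum>k<d. \<bar>g * (if a = b then 1 else 0) + be * (if a = k then 1 else 0)\<bar>)
   = real d * (\<bar>g + be\<bar> + (real d - 1) * \<bar>be\<bar> + (real d - 1) * \<bar>g\<bar>)"
proof -
  have "(\<Sum>a<d. \<Sum>b<d. \<Sum>k<d. \<bar>g * (if a = b then 1 else 0) + be * (if a = k then 1 else 0)\<bar>)
     = (\<Sum>a<d. \<Sum>b<d. \<bar>g * (if a = b then 1 else 0) + be\<bar> + (real d - 1) * \<bar>g * (if a = b then 1 else 0)\<bar>)"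
  proof (intro sum.cong refl)
    fix a b assume "a \<in> {..<d}" "b \<in> {..<d}"
    thus "(\<Sum>k<d. \<bar>g * (if a = b then 1 else 0) + be * (if a = k then 1 else 0)\<bar>) = \<bar>g * (if a = b then 1 else 0) + be\<bar> + (real d - 1) * \<bar>g * (if a = b then 1 else 0)\<bar>"
      using sum_ind[of a d "\<lambda>t. \<bar>g * (if a = b then 1 else 0) + be * t\<bar>"] by simp
  qed
  also have "\<dots> = (\<Sum>a<d. \<bar>g + be\<bar> + (real d - 1) * \<bar>g\<bar> + (real d - 1) * (\<bar>be\<bar> + (real d - 1) * 0))"
  proof (intro sum.cong refl)
    fix a assume "a \<in> {..<d}"
    thus "(\<Sum>b<d. \<bar>g * (if a = b then 1 else 0) + be\<bar> + (real d - 1) * \<bar>g * (if a = b then 1 else 0)\<bar>) = \<bar>g + be\<bar> + (real d - 1) * \<bar>g\<bar> + (real d - 1) * (\<bar>be\<bar> + (real d - 1) * 0)"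
      using sum_ind[of a d "\<lambda>t. \<bar>g * t + be\<bar> + (real d - 1) * \<bar>g * t\<bar>"] by (simp add: algebra_simps)
  qed
  also have "\<dots> = real d * (\<bar>g + be\<bar> + (real d - 1) * \<bar>be\<bar> + (real d - 1) * \<bar>g\<bar>)"
    by (simp add: algebra_simps)
  finally show ?thesis .
qed

lemma negA:
  assumes u: "onb d u" and d: "d \<ge> 2" and p: "0 \<le> p" "p \<le> 1"
  shows "negativity (d*d) d (VA d u * isotropic d p * adj (VA d u)) = \<bar>p * real d ^ 2 - 1\<bar> / (2 * (real d + 1))"
proof -
  have d0: "d > 0" using d by simp
  define b where "b = tt d p"
  define g where "g = (p - b) / d"
  define cf where "cf x = (case x of (i,j,m) \<Rightarrow> g * (if i = j then 1 else 0) + b * (if i = m then 1 else 0))" for x :: "nat \<times> nat \<times> nat"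
  define c where "c r = \<bar>cf (dec3 d r)\<bar>" for r
  let ?M = "ptrans (d*d) d (VA d u * isotropic d p * adj (VA d u))"
  have Mc: "?M \<in> carrier_mat (d*d*d) (d*d*d)" by (simp add: ptrans_def)
  have Wc: "W3 d u \<in> carrier_mat (d*d*d) (d*d*d)" by (simp add: W3_def)
  have M': "adj (W3 d u) * ?M * W3 d u = mat3 d (MpAf (complex_of_real g) (complex_of_real b))"
    using MpA[OF u d0, of p] unfolding MpAf_def g_def b_def by simp
  have lam: "(\<lambda>(i,j,m) y. if (i,j,m) = y then complex_of_real ((g * (if i = j then 1 else 0) + b * (if i = m then 1 else 0))^2) else 0)
     = (\<lambda>x y. if x = y then complex_of_real ((cf x)^2) else 0)"
    by (intro ext) (auto simp: cf_def split: prod.splits)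
  have D: "adj (adj (W3 d u) * ?M * W3 d u) * (adj (W3 d u) * ?M * W3 d u)
     = mat (d*d*d) (d*d*d) (\<lambda>(r,s). if r = s then complex_of_real ((c r)^2) else 0)"
    unfolding M' MpA_sq lam mat3_diag c_def power2_abs ..
  have tn: "trace_norm ?M = (\<Sum>r<d*d*d. c r)"
    by (rule trace_norm_diag[OF Mc Wc W3_unitary[OF u] D]) (simp add: c_def)
  also have "\<dots> = (\<Sum>a<d. \<Sum>b'<d. \<Sum>k<d. \<bar>g * (if a = b' then 1 else 0) + b * (if a = k then 1 else 0)\<bar>)"
    unfolding c_def using sum3[of "\<lambda>x. \<bar>cf x\<bar>" d] by (simp add: cf_def)
  also have "\<dots> = real d * (\<bar>g + b\<bar> + (real d - 1) * \<bar>b\<bar> + (real d - 1) * \<bar>g\<bar>)"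
    by (rule traceA_sum)
  finally have tn: "trace_norm ?M = real d * (\<bar>g + b\<bar> + (real d - 1) * \<bar>b\<bar> + (real d - 1) * \<bar>g\<bar>)" .
  have dr: "real d \<ge> 2" using d by simp
  have dd: "real d * real d \<ge> 2 * 2" using dr by (intro mult_mono) auto
  have q: "real d ^ 2 - 1 > 0" using dd by (simp add: power2_eq_square)
  have b0: "b \<ge> 0" unfolding b_def using p q by simp
  have hb: "(real d ^ 2 - 1) * b = 1 - p" unfolding b_def using q by simp
  have e1: "real d * ((p - b) / real d) = p - b" using d0 by simp
  have gb: "g + b = p / d + b * (1 - 1 / d)" unfolding g_def by (simp add: diff_divide_distrib right_diff_distrib)
  have gb0: "g + b \<ge> 0" unfolding gb using p b0 dr by (intro add_nonneg_nonneg mult_nonneg_nonneg) auto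
  have "real d * (g + b) + real d * (real d - 1) * b = (p - b) + real d * b + real d * (real d - 1) * b"
    unfolding g_def using e1 by (simp add: distrib_left)
  also have "\<dots> = p + (real d ^ 2 - 1) * b" by (simp add: algebra_simps power2_eq_square)
  also have "\<dots> = 1" using hb by simp
  finally have one: "real d * (g + b) + real d * (real d - 1) * b = 1" .
  have pb: "p - b = (p * real d ^ 2 - 1) / (real d ^ 2 - 1)"
  proof -
    have "(p - b) * (real d ^ 2 - 1) = p * real d ^ 2 - 1" using hb by (simp add: algebra_simps)
    thus ?thesis using q by (simp add: eq_divide_eq)
  qed
  have gv: "g = (p * real d ^ 2 - 1) / ((real d ^ 2 - 1) * real d)"
    unfolding g_def pb by simp
  have "trace_norm ?M = 1 + real d * (real d - 1) * \<bar>g\<bar>"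
    unfolding tn using one gb0 b0 by (simp add: algebra_simps)
  hence "negativity (d*d) d (VA d u * isotropic d p * adj (VA d u)) = real d * (real d - 1) * \<bar>g\<bar> / 2"
    by (simp add: negativity_def)
  also have "\<dots> = \<bar>p * real d ^ 2 - 1\<bar> / (2 * (real d + 1))"
  proof -
    have f: "real d ^ 2 - 1 = (real d - 1) * (real d + 1)" by (simp add: algebra_simps power2_eq_square)
    have ga: "\<bar>g\<bar> = \<bar>p * real d ^ 2 - 1\<bar> / ((real d ^ 2 - 1) * real d)"
      unfolding gv using q d0 by (simp add: abs_divide abs_mult)
    have nz: "real d - 1 \<noteq> 0" "real d \<noteq> 0" "real d + 1 \<noteq> 0" using dr by auto
    have key: "\<And>X. real d * (real d - 1) * (X / ((real d - 1) * (real d + 1) * real d)) / 2 = X / (2 * (real d + 1))"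
      using dr by simp
    show ?thesis unfolding ga f by (rule key)
  qed
  finally show ?thesis .
qed

definition dec4 :: "nat \<Rightarrow> nat \<Rightarrow> nat \<times> nat \<times> nat \<times> nat" where
  "dec4 d r = (r div (d*d) div d, r div (d*d) mod d, r mod (d*d) div d, r mod (d*d) mod d)"
definition T4 :: "nat \<Rightarrow> (nat \<times> nat \<times> nat \<times> nat) set" where
  "T4 d = {..<d} \<times> {..<d} \<times> {..<d} \<times> {..<d}"
type_synonym q4 = "nat \<times> nat \<times> nat \<times> nat"
definition mat4 :: "nat \<Rightarrow> (q4 \<Rightarrow> q4 \<Rightarrow> complex) \<Rightarrow> complex mat" where
  "mat4 d F = mat (d*d*d*d) (d*d*d*d) (\<lambda>(r,c). F (dec4 d r) (dec4 d c))"

lemma dddd: "d*d*d*d = (d*d)*(d*(d::nat))" by (simp add: mult.assoc)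

lemma dec4_T4: "r < d*d*d*d \<Longrightarrow> dec4 d r \<in> T4 d"
proof -
  assume r: "r < d*d*d*d"
  hence d: "d > 0" by (cases d) auto
  have "r div (d*d) < d*d" using r d by (simp add: div_less_iff_less_mult dddd)
  hence 1: "r div (d*d) div d < d" using d by (simp add: div_less_iff_less_mult)
  have "r mod (d*d) < d*d" using d by simp
  hence 2: "r mod (d*d) div d < d" using d by (simp add: div_less_iff_less_mult)
  show ?thesis using 1 2 d by (simp add: dec4_def T4_def)
qed

lemma dec4_inj: "dec4 d r = dec4 d s \<Longrightarrow> r = s"
proof -
  assume "dec4 d r = dec4 d s"
  hence "r div (d*d) div d = s div (d*d) div d" "r div (d*d) mod d = s div (d*d) mod d"
    "r mod (d*d) div d = s mod (d*d) div d" "r mod (d*d) mod d = s mod (d*d) mod d"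
    by (auto simp: dec4_def)
  hence "r div (d*d) = s div (d*d)" "r mod (d*d) = s mod (d*d)" by (metis div_mult_mod_eq)+
  thus "r = s" by (metis div_mult_mod_eq)
qed

lemma dec4_enc2: "y < d*d \<Longrightarrow> dec4 d (x*(d*d)+y) = (x div d, x mod d, y div d, y mod d)"
  unfolding dec4_def by (simp only: divmod_enc)

lemma sum4: "(\<Sum>r<d*d*d*d. f (dec4 d r)) = (\<Sum>a<d. \<Sum>b<d. \<Sum>k<d. \<Sum>l<d. f (a,b,k,l))"
proof -
  have "(\<Sum>r<d*d*d*d. f (dec4 d r)) = (\<Sum>x<d*d. \<Sum>y<d*d. f (dec4 d (x*(d*d)+y)))"
    unfolding dddd by (rule sum_split)
  also have "\<dots> = (\<Sum>x<d*d. \<Sum>y<d*d. f (x div d, x mod d, y div d, y mod d))"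
    by (intro sum.cong refl) (simp only: lessThan_iff dec4_enc2)
  also have "\<dots> = (\<Sum>a<d. \<Sum>b<d. \<Sum>y<d*d. f (a, b, y div d, y mod d))"
    using sum2[where d=d and f="\<lambda>a b. \<Sum>y<d*d. f (a, b, y div d, y mod d)"] .
  also have "\<dots> = (\<Sum>a<d. \<Sum>b<d. \<Sum>k<d. \<Sum>l<d. f (a,b,k,l))"
  proof (rule sum.cong[OF refl], rule sum.cong[OF refl])
    fix a b show "(\<Sum>y<d*d. f (a, b, y div d, y mod d)) = (\<Sum>k<d. \<Sum>l<d. f (a,b,k,l))"
      using sum2[where d=d and f="\<lambda>k l. f (a,b,k,l)"] .
  qed
  finally show ?thesis .
qed

lemma mat4_index[simp]: "r < d*d*d*d \<Longrightarrow> c < d*d*d*d \<Longrightarrow> mat4 d F $$ (r,c) = F (dec4 d r) (dec4 d c)"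
  "dim_row (mat4 d F) = d*d*d*d" "dim_col (mat4 d F) = d*d*d*d"
  by (simp_all add: mat4_def)

lemma mat4_carrier[simp]: "mat4 d F \<in> carrier_mat (d*d*d*d) (d*d*d*d)" by (simp add: mat4_def)

lemma mat4_mult: "mat4 d F * mat4 d G = mat4 d (\<lambda>x y. \<Sum>a<d. \<Sum>b<d. \<Sum>k<d. \<Sum>l<d. F x (a,b,k,l) * G (a,b,k,l) y)"
  by (rule eq_matI) (auto simp: scalar_prod_def atLeast0LessThan sum4[where d=d and f="\<lambda>z. F _ z * G z _"])

lemma adj_mat4: "adj (mat4 d F) = mat4 d (\<lambda>x y. cnj (F y x))"
  by (rule eq_matI) auto

lemma mat4_eq: "(\<And>x y. x \<in> T4 d \<Longrightarrow> y \<in> T4 d \<Longrightarrow> F x y = G x y) \<Longrightarrow> mat4 d F = mat4 d G"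
  by (rule eq_matI) (auto simp: dec4_T4)

lemma one_mat4: "1\<^sub>m (d*d*d*d) = mat4 d (\<lambda>x y. if x = y then 1 else 0)"
  by (rule eq_matI) (auto dest: dec4_inj)

lemma mat4_diag: "mat4 d (\<lambda>x y. if x = y then complex_of_real (h x) else 0)
   = mat (d*d*d*d) (d*d*d*d) (\<lambda>(r,s). if r = s then complex_of_real (h (dec4 d r)) else 0)"
  by (rule eq_matI) (auto dest: dec4_inj)

lemma sum4_T4: "(\<Sum>a<d. \<Sum>b<d. \<Sum>k<d. \<Sum>l<d. f (a,b,k,l)) = (\<Sum>q\<in>T4 d. f q)"
  unfolding T4_def by (simp add: sum.cartesian_product)

lemma ptrans_mat4: "d > 0 \<Longrightarrow> ptrans (d*d) (d*d) (mat4 d F) = mat4 d (\<lambda>(a,b,k,l) (a',b',k',l'). F (a,b,k',l') (a',b',k,l))"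
proof (rule eq_matI)
  fix i j assume d: "d > 0" and i: "i < dim_row (mat4 d (\<lambda>(a,b,k,l) (a',b',k',l'). F (a,b,k',l') (a',b',k,l)))"
    and j: "j < dim_col (mat4 d (\<lambda>(a,b,k,l) (a',b',k',l'). F (a,b,k',l') (a',b',k,l)))"
  hence i': "i < d*d*d*d" and j': "j < d*d*d*d" by auto
  have dd: "d*d > 0" using d by simp
  have l1: "i div (d*d) * (d*d) + j mod (d*d) < d*d*d*d"
    unfolding dddd using i' dd by (intro enc_less) (auto simp: less_mult_imp_div_less dddd)
  have l2: "j div (d*d) * (d*d) + i mod (d*d) < d*d*d*d"
    unfolding dddd using j' dd by (intro enc_less) (auto simp: less_mult_imp_div_less dddd)
  have m1: "i mod (d*d) < d*d" "j mod (d*d) < d*d" using dd by auto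
  show "ptrans (d*d) (d*d) (mat4 d F) $$ (i,j) = mat4 d (\<lambda>(a,b,k,l) (a',b',k',l'). F (a,b,k',l') (a',b',k,l)) $$ (i,j)"
    using i' j' l1 l2 m1 by (simp add: ptrans_def dec4_enc2 dec4_def[of d i] dec4_def[of d j] del: divmod_enc)
qed (auto simp: ptrans_def)

lemma fact1: "(\<And>y. y < d \<Longrightarrow> F y = C * f y) \<Longrightarrow> (\<Sum>y<d. F y) = (C::complex) * (\<Sum>y<d. f y)"
  by (simp add: sum_distrib_left)

lemma fact2: "(\<And>y1 y2. y1 < d \<Longrightarrow> y2 < e \<Longrightarrow> F y1 y2 = C * (f y1 * g y2)) \<Longrightarrow>
   (\<Sum>y1<d. \<Sum>y2<e. F y1 y2) = (C::complex) * ((\<Sum>y1<d. f y1) * (\<Sum>y2<e. g y2))"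
proof -
  assume h: "\<And>y1 y2. y1 < d \<Longrightarrow> y2 < e \<Longrightarrow> F y1 y2 = C * (f y1 * g y2)"
  have "C * ((\<Sum>y1<d. f y1) * (\<Sum>y2<e. g y2)) = C * (\<Sum>y1<d. \<Sum>y2<e. f y1 * g y2)"
    by (subst sum_product) (rule refl)
  also have "\<dots> = (\<Sum>y1<d. \<Sum>y2<e. C * (f y1 * g y2))" by (simp add: sum_distrib_left)
  also have "\<dots> = (\<Sum>y1<d. \<Sum>y2<e. F y1 y2)" using h by simp
  finally show ?thesis by simp
qed

definition hf :: "nat \<Rightarrow> (nat \<Rightarrow> nat \<Rightarrow> complex) \<Rightarrow> (nat \<Rightarrow> nat \<Rightarrow> complex) \<Rightarrow> nat \<Rightarrow> nat \<Rightarrow> complex" where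
  "hf d u v k l = (\<Sum>x<d. cnj (u k x) * cnj (v l x))"

lemma VAB_entry: "r < d*d*d*d \<Longrightarrow> x < d*d \<Longrightarrow> dec4 d r = (a,b,k,l) \<Longrightarrow>
   VAB d u v $$ (r,x) = u k a * cnj (u k (x div d)) * v l b * cnj (v l (x mod d))"
  by (simp add: VAB_def dec4_def Let_def)

lemma VAB_dims[simp]: "dim_row (VAB d u v) = d*d*d*d" "dim_col (VAB d u v) = d*d"
  by (simp_all add: VAB_def)

lemma sigmaAB:
  assumes u: "onb d u" and v: "onb d v" and d: "d > 0"
  shows "VAB d u v * isotropic d p * adj (VAB d u v) = mat4 d (\<lambda>(a,b,k,l) (a',b',k',l').
     complex_of_real ((p - tt d p) / d) * ((u k a * v l b * hf d u v k l) * cnj (u k' a' * v l' b' * hf d u v k' l'))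
     + complex_of_real (tt d p) * (if k = k' \<and> l = l' then u k a * v l b * cnj (u k a') * cnj (v l b') else 0))"
    (is "_ = mat4 d ?S")
proof (rule eq_matI)
  define ga where "ga = complex_of_real ((p - tt d p) / d)"
  define be where "be = complex_of_real (tt d p)"
  define Dg where "Dg x = (if x div d = x mod d then (1::complex) else 0)" for x :: nat
  fix i j assume i: "i < dim_row (mat4 d ?S)" and j: "j < dim_col (mat4 d ?S)"
  hence i': "i < d*d*d*d" and j': "j < d*d*d*d" by auto
  obtain a b k l where dec: "dec4 d i = (a,b,k,l)" by (cases "dec4 d i") auto
  obtain a' b' k' l' where dec': "dec4 d j = (a',b',k',l')" by (cases "dec4 d j") auto
  have abk: "a < d" "b < d" "k < d" "l < d" using dec4_T4[OF i'] dec by (auto simp: T4_def)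
  have abk': "a' < d" "b' < d" "k' < d" "l' < d" using dec4_T4[OF j'] dec' by (auto simp: T4_def)
  have VAi: "\<And>x. x < d*d \<Longrightarrow> VAB d u v $$ (i,x) = u k a * cnj (u k (x div d)) * v l b * cnj (v l (x mod d))"
    using VAB_entry[OF i' _ dec] by simp
  have VAj: "\<And>x. x < d*d \<Longrightarrow> VAB d u v $$ (j,x) = u k' a' * cnj (u k' (x div d)) * v l' b' * cnj (v l' (x mod d))"
    using VAB_entry[OF j' _ dec'] by simp
  have S1: "(\<Sum>x<d*d. VAB d u v $$ (i,x) * Dg x) = u k a * v l b * hf d u v k l"
  proof -
    have "(\<Sum>x<d*d. VAB d u v $$ (i,x) * Dg x) = (\<Sum>x<d*d. (\<lambda>x1 x2. u k a * cnj (u k x1) * v l b * cnj (v l x2) * (if x1 = x2 then 1 else 0)) (x div d) (x mod d))"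
      by (intro sum.cong) (simp_all add: VAi Dg_def)
    also have "\<dots> = (\<Sum>x1<d. \<Sum>x2<d. u k a * cnj (u k x1) * v l b * cnj (v l x2) * (if x1 = x2 then 1 else 0))"
      by (rule sum2)
    also have "\<dots> = (\<Sum>x1<d. u k a * cnj (u k x1) * v l b * cnj (v l x1))"
      by (simp add: if_distrib[of "\<lambda>x. _ * x"] sum.delta sum.delta' cong: if_cong)
    also have "\<dots> = u k a * v l b * hf d u v k l"
      unfolding hf_def by (rule fact1) (simp add: mult_ac)
    finally show ?thesis .
  qed
  have R: "(VAB d u v * isotropic d p) $$ (i,y) = ga * Dg y * (u k a * v l b * hf d u v k l) + be * VAB d u v $$ (i,y)"
    if y: "y < d*d" for y
  proof -
    have "(VAB d u v * isotropic d p) $$ (i,y) = (\<Sum>x<d*d. VAB d u v $$ (i,x) * isotropic d p $$ (x,y))"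
      using i' y by (simp add: scalar_prod_def atLeast0LessThan)
    also have "\<dots> = (\<Sum>x<d*d. ga * Dg y * (VAB d u v $$ (i,x) * Dg x) + (if x = y then be * VAB d u v $$ (i,y) else 0))"
      using y d by (intro sum.cong) (auto simp: iso_entry Dg_def ga_def be_def algebra_simps)
    also have "\<dots> = ga * Dg y * (\<Sum>x<d*d. VAB d u v $$ (i,x) * Dg x) + be * VAB d u v $$ (i,y)"
      using y by (simp add: sum.distrib sum_distrib_left)
    finally show ?thesis using S1 by simp
  qed
  have S2: "(\<Sum>y<d*d. Dg y * cnj (VAB d u v $$ (j,y))) = cnj (u k' a' * v l' b' * hf d u v k' l')"
  proof -
    have "(\<Sum>y<d*d. Dg y * cnj (VAB d u v $$ (j,y))) = (\<Sum>y<d*d. (\<lambda>x1 x2. cnj (u k' a' * cnj (u k' x1) * v l' b' * cnj (v l' x2)) * (if x1 = x2 then 1 else 0)) (y div d) (y mod d))"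
      by (intro sum.cong) (simp_all add: VAj Dg_def)
    also have "\<dots> = (\<Sum>x1<d. \<Sum>x2<d. cnj (u k' a' * cnj (u k' x1) * v l' b' * cnj (v l' x2)) * (if x1 = x2 then 1 else 0))"
      by (rule sum2)
    also have "\<dots> = (\<Sum>x1<d. cnj (u k' a' * cnj (u k' x1) * v l' b' * cnj (v l' x1)))"
      by (simp add: if_distrib[of "\<lambda>x. _ * x"] sum.delta sum.delta' cong: if_cong)
    also have "\<dots> = cnj (u k' a' * v l' b' * hf d u v k' l')"
      unfolding hf_def by (simp add: sum_distrib_left mult_ac)
    finally show ?thesis .
  qed
  have S3: "(\<Sum>y<d*d. VAB d u v $$ (i,y) * cnj (VAB d u v $$ (j,y))) = (if k = k' \<and> l = l' then u k a * v l b * cnj (u k a') * cnj (v l b') else 0)"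
  proof -
    have "(\<Sum>y<d*d. VAB d u v $$ (i,y) * cnj (VAB d u v $$ (j,y))) = (\<Sum>y<d*d. (\<lambda>x1 x2. u k a * cnj (u k x1) * v l b * cnj (v l x2) * cnj (u k' a' * cnj (u k' x1) * v l' b' * cnj (v l' x2))) (y div d) (y mod d))"
      by (intro sum.cong) (simp_all add: VAi VAj)
    also have "\<dots> = (\<Sum>x1<d. \<Sum>x2<d. u k a * cnj (u k x1) * v l b * cnj (v l x2) * cnj (u k' a' * cnj (u k' x1) * v l' b' * cnj (v l' x2)))"
      by (rule sum2)
    also have "\<dots> = (u k a * v l b * cnj (u k' a') * cnj (v l' b')) * ((\<Sum>x1<d. cnj (u k x1) * u k' x1) * (\<Sum>x2<d. cnj (v l x2) * v l' x2))"
      by (rule fact2) (simp add: mult_ac)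
    also have "\<dots> = (if k = k' \<and> l = l' then u k a * v l b * cnj (u k a') * cnj (v l b') else 0)"
      using onb_sum[OF u abk(3) abk'(3)] onb_sum[OF v abk(4) abk'(4)] by auto
    finally show ?thesis .
  qed
  have "(VAB d u v * isotropic d p * adj (VAB d u v)) $$ (i,j) = (\<Sum>y<d*d. (VAB d u v * isotropic d p) $$ (i,y) * adj (VAB d u v) $$ (y,j))"
    using i' j' by (simp add: scalar_prod_def atLeast0LessThan)
  also have "\<dots> = (\<Sum>y<d*d. ga * (u k a * v l b * hf d u v k l) * (Dg y * cnj (VAB d u v $$ (j,y))) + be * (VAB d u v $$ (i,y) * cnj (VAB d u v $$ (j,y))))"
    using j' by (intro sum.cong) (auto simp: R algebra_simps)
  also have "\<dots> = ga * (u k a * v l b * hf d u v k l) * cnj (u k' a' * v l' b' * hf d u v k' l') + be * (if k = k' \<and> l = l' then u k a * v l b * cnj (u k a') * cnj (v l b') else 0)"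
    by (simp add: sum.distrib sum_distrib_left[symmetric] S2 S3)
  also have "\<dots> = mat4 d ?S $$ (i,j)" using i' j' dec dec' by (simp add: ga_def be_def)
  finally show "(VAB d u v * isotropic d p * adj (VAB d u v)) $$ (i,j) = mat4 d ?S $$ (i,j)" .
qed auto

definition W4 :: "nat \<Rightarrow> (nat \<Rightarrow> nat \<Rightarrow> complex) \<Rightarrow> (nat \<Rightarrow> nat \<Rightarrow> complex) \<Rightarrow> complex mat" where
  "W4 d u v = mat4 d (\<lambda>(a,b,k,l) (i,j,m,n). u i a * v j b * ((if m = k then 1 else 0) * (if n = l then 1 else 0)))"

lemma W4_unitary: assumes u: "onb d u" and v: "onb d v" shows "adj (W4 d u v) * W4 d u v = 1\<^sub>m (d*d*d*d)"
  unfolding W4_def adj_mat4 mat4_mult one_mat4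
proof (rule mat4_eq, goal_cases)
  case (1 x y)
  obtain i j m n where xx: "x = (i,j,m,n)" "i < d" "j < d" "m < d" "n < d" using 1 by (auto simp: T4_def)
  obtain i' j' m' n' where yy: "y = (i',j',m',n')" "i' < d" "j' < d" "m' < d" "n' < d" using 1 by (auto simp: T4_def)
  show ?case (is "?L = ?R")
  proof -
    have "?L = (\<Sum>a<d. \<Sum>b<d. cnj (u i a * v j b) * (u i' a * v j' b) * ((if m = m' then 1 else 0) * (if n = n' then 1 else 0)))"
      using xx yy by (simp add: ifs cong: if_cong)
    also have "\<dots> = ((if m = m' then 1 else 0) * (if n = n' then 1 else 0)) * ((\<Sum>a<d. cnj (u i a) * u i' a) * (\<Sum>b<d. cnj (v j b) * v j' b))"
      by (rule fact2) (simp add: mult_ac)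
    also have "\<dots> = ?R"
      unfolding onb_sum[OF u xx(2) yy(2)] onb_sum[OF v xx(3) yy(3)] using xx yy by auto
    finally show ?thesis .
  qed
qed

lemma innerAB:
  assumes u: "onb d u" and v: "onb d v" and lt: "i < d" "j < d" "m < d" "n < d" "a' < d" "b' < d" "k' < d" "l' < d"
  shows "(\<Sum>a<d. \<Sum>b<d. \<Sum>k<d. \<Sum>l<d. cnj (u i a * v j b * ((if m = k then 1 else 0) * (if n = l then 1 else 0))) *
      (ga * ((u k' a * v l' b * H k' l') * cnj (u k a' * v l b' * H k l)) + be * (if k' = k \<and> l' = l then u k' a * v l' b * cnj (u k' a') * cnj (v l' b') else 0)))
    = ga * (if i = k' \<and> j = l' then H k' l' * cnj (u m a' * v n b' * H m n) else 0) + be * (if k' = m \<and> l' = n \<and> i = m \<and> j = n then cnj (u m a') * cnj (v n b') else 0)"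
proof -
  define c where "c \<longleftrightarrow> k' = m \<and> l' = n"
  let ?C = "ga * (H k' l' * cnj (u m a' * v n b' * H m n)) + be * (if c then cnj (u k' a') * cnj (v l' b') else 0)"
  have "(\<Sum>a<d. \<Sum>b<d. \<Sum>k<d. \<Sum>l<d. cnj (u i a * v j b * ((if m = k then 1 else 0) * (if n = l then 1 else 0))) *
      (ga * ((u k' a * v l' b * H k' l') * cnj (u k a' * v l b' * H k l)) + be * (if k' = k \<and> l' = l then u k' a * v l' b * cnj (u k' a') * cnj (v l' b') else 0)))
    = (\<Sum>a<d. \<Sum>b<d. cnj (u i a * v j b) * (ga * ((u k' a * v l' b * H k' l') * cnj (u m a' * v n b' * H m n)) + be * (if c then u k' a * v l' b * cnj (u k' a') * cnj (v l' b') else 0)))"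
    using lt unfolding c_def by (simp add: ifs cong: if_cong)
  also have "\<dots> = ?C * ((\<Sum>a<d. cnj (u i a) * u k' a) * (\<Sum>b<d. cnj (v j b) * v l' b))"
    by (rule fact2) (cases c; simp add: algebra_simps)
  also have "\<dots> = ga * (if i = k' \<and> j = l' then H k' l' * cnj (u m a' * v n b' * H m n) else 0) + be * (if k' = m \<and> l' = n \<and> i = m \<and> j = n then cnj (u m a') * cnj (v n b') else 0)"
    unfolding onb_sum[OF u lt(1) lt(7)] onb_sum[OF v lt(2) lt(8)] c_def
    by (cases "k' = m \<and> l' = n"; cases "i = k'"; cases "j = l'") auto
  finally show ?thesis .
qed

lemma genB: "(c1 \<Longrightarrow> X = Y) \<Longrightarrow> (ga * (if c1 then X else 0) + be * (if c2 then 1 else 0)) * ((if e1 then 1 else 0) * (if e2 then 1 else 0))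
   = ga * (if c1 \<and> e1 \<and> e2 then Y else (0::complex)) + be * (if c2 \<and> e1 \<and> e2 then 1 else 0)"
  by (cases c1; cases c2; cases e1; cases e2) simp_all

lemma outerAB:
  assumes u: "onb d u" and v: "onb d v" and lt: "i < d" "j < d" "m < d" "n < d" "i' < d" "j' < d" "m' < d" "n' < d"
  shows "(\<Sum>a'<d. \<Sum>b'<d. \<Sum>k'<d. \<Sum>l'<d. (ga * (if i = k' \<and> j = l' then H k' l' * cnj (u m a' * v n b' * H m n) else 0) + be * (if k' = m \<and> l' = n \<and> i = m \<and> j = n then cnj (u m a') * cnj (v n b') else 0))
      * (u i' a' * v j' b' * ((if m' = k' then 1 else 0) * (if n' = l' then 1 else 0))))
    = ga * (if i = m' \<and> j = n' \<and> i' = m \<and> j' = n then H i j * cnj (H m n) else 0) + be * (if m = m' \<and> n = n' \<and> i = m \<and> j = n \<and> i' = m \<and> j' = n then 1 else 0)"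
proof -
  define c1 where "c1 \<longleftrightarrow> i = m' \<and> j = n'"
  define c2 where "c2 \<longleftrightarrow> m' = m \<and> n' = n \<and> i = m \<and> j = n"
  let ?C = "ga * (if c1 then H m' n' * cnj (H m n) else 0) + be * (if c2 then 1 else 0)"
  have "(\<Sum>a'<d. \<Sum>b'<d. \<Sum>k'<d. \<Sum>l'<d. (ga * (if i = k' \<and> j = l' then H k' l' * cnj (u m a' * v n b' * H m n) else 0) + be * (if k' = m \<and> l' = n \<and> i = m \<and> j = n then cnj (u m a') * cnj (v n b') else 0))
      * (u i' a' * v j' b' * ((if m' = k' then 1 else 0) * (if n' = l' then 1 else 0))))
    = (\<Sum>a'<d. \<Sum>b'<d. (ga * (if c1 then H m' n' * cnj (u m a' * v n b' * H m n) else 0) + be * (if c2 then cnj (u m a') * cnj (v n b') else 0))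
      * (u i' a' * v j' b'))"
    using lt unfolding c1_def c2_def by (simp add: ifs cong: if_cong)
  also have "\<dots> = ?C * ((\<Sum>a'<d. cnj (u m a') * u i' a') * (\<Sum>b'<d. cnj (v n b') * v j' b'))"
    by (rule fact2) (cases c1; cases c2; simp add: algebra_simps)
  also have "\<dots> = ga * (if i = m' \<and> j = n' \<and> i' = m \<and> j' = n then H i j * cnj (H m n) else 0) + be * (if m = m' \<and> n = n' \<and> i = m \<and> j = n \<and> i' = m \<and> j' = n then 1 else 0)"
  proof -
    have t1: "(i = m' \<and> j = n' \<and> i' = m \<and> j' = n) = (c1 \<and> m = i' \<and> n = j')" unfolding c1_def by auto
    have t2: "(m = m' \<and> n = n' \<and> i = m \<and> j = n \<and> i' = m \<and> j' = n) = (c2 \<and> m = i' \<and> n = j')" unfolding c2_def by auto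
    have hH: "c1 \<Longrightarrow> H m' n' * cnj (H m n) = H i j * cnj (H m n)" unfolding c1_def by auto
    show ?thesis unfolding onb_sum[OF u lt(3) lt(5)] onb_sum[OF v lt(4) lt(6)] t1 t2
      by (rule genB[OF hH])
  qed
  finally show ?thesis .
qed

definition MpBf :: "complex \<Rightarrow> complex \<Rightarrow> (nat \<Rightarrow> nat \<Rightarrow> complex) \<Rightarrow> q4 \<Rightarrow> q4 \<Rightarrow> complex" where
  "MpBf g b H = (\<lambda>(i,j,m,n) (i',j',m',n'). g * (if i = m' \<and> j = n' \<and> i' = m \<and> j' = n then H i j * cnj (H m n) else 0)
      + b * (if m = m' \<and> n = n' \<and> i = m \<and> j = n \<and> i' = m \<and> j' = n then 1 else 0))"

lemma MpAB:
  assumes u: "onb d u" and v: "onb d v" and d: "d > 0"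
  shows "adj (W4 d u v) * ptrans (d*d) (d*d) (VAB d u v * isotropic d p * adj (VAB d u v)) * W4 d u v
    = mat4 d (MpBf (complex_of_real ((p - tt d p) / d)) (complex_of_real (tt d p)) (hf d u v))"
  unfolding sigmaAB[OF u v d] ptrans_mat4[OF d] W4_def adj_mat4 mat4_mult MpBf_def
proof (rule mat4_eq, goal_cases)
  case (1 x y)
  obtain i j m n where xx: "x = (i,j,m,n)" "i < d" "j < d" "m < d" "n < d" using 1 by (auto simp: T4_def)
  obtain i' j' m' n' where yy: "y = (i',j',m',n')" "i' < d" "j' < d" "m' < d" "n' < d" using 1 by (auto simp: T4_def)
  let ?ga = "complex_of_real ((p - tt d p) / d)" and ?be = "complex_of_real (tt d p)"
  show ?case (is "?L = ?R")
  proof -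
    have "?L = (\<Sum>a'<d. \<Sum>b'<d. \<Sum>k'<d. \<Sum>l'<d. (?ga * (if i = k' \<and> j = l' then hf d u v k' l' * cnj (u m a' * v n b' * hf d u v m n) else 0) + ?be * (if k' = m \<and> l' = n \<and> i = m \<and> j = n then cnj (u m a') * cnj (v n b') else 0))
      * (u i' a' * v j' b' * ((if m' = k' then 1 else 0) * (if n' = l' then 1 else 0))))"
      unfolding xx yy prod.case
      by (intro sum.cong refl arg_cong2[where f="(*)"] innerAB[OF u v]) (use xx in auto)
    also have "\<dots> = ?R"
      unfolding xx yy prod.case by (rule outerAB[OF u v]) (use xx yy in auto)
    finally show ?thesis .
  qed
qed

lemma MpBf_alt: "MpBf g b H q (i,j,m,n) = (if q = (m,n,i,j) \<and> True then g * (H m n * cnj (H i j)) else 0) + (if q = (i,j,m,n) \<and> (i = m \<and> j = n) then b else 0)"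
proof -
  obtain i0 j0 m0 n0 where q: "q = (i0,j0,m0,n0)" by (cases q) auto
  have c1: "(i0 = m \<and> j0 = n \<and> i = m0 \<and> j = n0) = ((i0,j0,m0,n0) = (m,n,i,j) \<and> True)" by auto
  have c2: "(m0 = m \<and> n0 = n \<and> i0 = m0 \<and> j0 = n0 \<and> i = m0 \<and> j = n0) = ((i0,j0,m0,n0) = (i,j,m,n) \<and> (i = m \<and> j = n))" by auto
  have hh: "(i0,j0,m0,n0) = (m,n,i,j) \<and> True \<Longrightarrow> H i0 j0 * cnj (H m0 n0) = H m n * cnj (H i j)" by auto
  have gen: "\<And>P Q X Y. (P \<Longrightarrow> X = Y) \<Longrightarrow> g * (if P then X else 0) + b * (if Q then 1 else 0) = (if P then g * Y else 0) + (if Q then b else 0)"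
    by auto
  show ?thesis unfolding q MpBf_def prod.case c1 c2 by (rule gen[OF hh])
qed

lemma gen4B: "cnj ((if P1 then A1 else 0) + (if Q1 then complex_of_real b else 0)) *
    ((if P2 then A2 else 0) + (if Q2 then complex_of_real b else 0))
  = (if P1 then cnj A1 else 0) * (if P2 then A2 else 0)
   + (if P1 then cnj A1 else 0) * (if Q2 then complex_of_real b else 0)
   + (if Q1 then complex_of_real b else 0) * (if P2 then A2 else 0)
   + (if Q1 then complex_of_real b else 0) * (if Q2 then complex_of_real b else 0)"
  by (cases P1; cases Q1; cases P2; cases Q2) (simp_all add: algebra_simps)

lemma genC: assumes "cnj A * A = complex_of_real (r^2)" and "D \<Longrightarrow> A = complex_of_real r"
  shows "(if True then cnj A * A else 0) + (if D then cnj A * complex_of_real b else 0) + (if D then complex_of_real b * A else 0)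
     + (if D then complex_of_real b * complex_of_real b else 0) = complex_of_real ((r + b * (if D then 1 else 0))^2)"
  using assms by (cases D) (simp_all add: power2_eq_square algebra_simps)

lemma MpB_sq:
  fixes g b :: real
  shows "adj (mat4 d (MpBf g b H)) * mat4 d (MpBf g b H) =
    mat4 d (\<lambda>(i,j,m,n) y. if (i,j,m,n) = y then complex_of_real ((g * cmod (H m n) * cmod (H i j) + b * (if i = m \<and> j = n then 1 else 0))^2) else 0)"
  unfolding adj_mat4 mat4_mult
proof (rule mat4_eq, goal_cases)
  case (1 x y)
  obtain i j m n where xx: "x = (i,j,m,n)" "i < d" "j < d" "m < d" "n < d" using 1 by (auto simp: T4_def)
  obtain i' j' m' n' where yy: "y = (i',j',m',n')" "i' < d" "j' < d" "m' < d" "n' < d" using 1 by (auto simp: T4_def)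
  have fin: "finite (T4 d)" by (simp add: T4_def)
  have in1: "(m,n,i,j) \<in> T4 d" "(i,j,m,n) \<in> T4 d" using xx by (auto simp: T4_def)
  let ?g = "complex_of_real g" and ?b = "complex_of_real b"
  let ?A = "\<lambda>i j m n. ?g * (H m n * cnj (H i j))"
  have "(\<Sum>a<d. \<Sum>b'<d. \<Sum>k<d. \<Sum>l<d. cnj (MpBf ?g ?b H (a, b', k, l) x) * MpBf ?g ?b H (a, b', k, l) y)
     = (\<Sum>q\<in>T4 d. cnj (MpBf ?g ?b H q x) * MpBf ?g ?b H q y)"
    by (rule sum4_T4)
  also have "\<dots> = (\<Sum>q\<in>T4 d. (if q = (m,n,i,j) \<and> True then cnj (?A i j m n) else 0) * (if q = (m',n',i',j') \<and> True then ?A i' j' m' n' else 0)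
       + (if q = (m,n,i,j) \<and> True then cnj (?A i j m n) else 0) * (if q = (i',j',m',n') \<and> (i' = m' \<and> j' = n') then ?b else 0)
       + (if q = (i,j,m,n) \<and> (i = m \<and> j = n) then ?b else 0) * (if q = (m',n',i',j') \<and> True then ?A i' j' m' n' else 0)
       + (if q = (i,j,m,n) \<and> (i = m \<and> j = n) then ?b else 0) * (if q = (i',j',m',n') \<and> (i' = m' \<and> j' = n') then ?b else 0))"
    unfolding xx yy MpBf_alt by (intro sum.cong refl gen4B)
  also have "\<dots> = (if (m,n,i,j) = (m',n',i',j') \<and> True \<and> True then cnj (?A i j m n) * ?A i' j' m' n' else 0)
     + (if (m,n,i,j) = (i',j',m',n') \<and> True \<and> (i' = m' \<and> j' = n') then cnj (?A i j m n) * ?b else 0)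
     + (if (i,j,m,n) = (m',n',i',j') \<and> (i = m \<and> j = n) \<and> True then ?b * ?A i' j' m' n' else 0)
     + (if (i,j,m,n) = (i',j',m',n') \<and> (i = m \<and> j = n) \<and> (i' = m' \<and> j' = n') then ?b * ?b else 0)"
    by (simp only: sum.distrib delta_prod[OF fin in1(1)] delta_prod[OF fin in1(2)])
  also have "\<dots> = (case x of (i,j,m,n) \<Rightarrow> \<lambda>y. if (i,j,m,n) = y then complex_of_real ((g * cmod (H m n) * cmod (H i j) + b * (if i = m \<and> j = n then 1 else 0))^2) else 0) y"
  proof (cases "x = y")
    case True
    hence e: "i' = i" "j' = j" "m' = m" "n' = n" using xx yy by auto
    have c1: "((m,n,i,j) = (m,n,i,j) \<and> True \<and> True) = True" by auto
    have c2: "((m,n,i,j) = (i,j,m,n) \<and> True \<and> (i = m \<and> j = n)) = (i = m \<and> j = n)" by auto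
    have c3: "((i,j,m,n) = (m,n,i,j) \<and> (i = m \<and> j = n) \<and> True) = (i = m \<and> j = n)" by auto
    have c4: "((i,j,m,n) = (i,j,m,n) \<and> (i = m \<and> j = n) \<and> (i = m \<and> j = n)) = (i = m \<and> j = n)" by auto
    have h1: "cnj (?A i j m n) * ?A i j m n = complex_of_real ((g * cmod (H m n) * cmod (H i j))^2)"
    proof -
      have "cnj (?A i j m n) * ?A i j m n = complex_of_real ((cmod (?A i j m n))^2)"
        by (subst complex_norm_square) (rule mult.commute)
      also have "cmod (?A i j m n) = \<bar>g\<bar> * cmod (H m n) * cmod (H i j)" by (simp add: norm_mult)
      finally show ?thesis by (simp add: power_mult_distrib)
    qed
    have h2: "i = m \<and> j = n \<Longrightarrow> ?A i j m n = complex_of_real (g * cmod (H m n) * cmod (H i j))"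
    proof -
      assume "i = m \<and> j = n"
      hence "?A i j m n = ?g * (H i j * cnj (H i j))" by simp
      also have "\<dots> = complex_of_real (g * (cmod (H i j))^2)" unfolding complex_norm_square[symmetric] by simp
      finally show ?thesis using \<open>i = m \<and> j = n\<close> by (simp add: power2_eq_square mult.assoc)
    qed
    show ?thesis unfolding e xx yy c1 c2 c3 c4 prod.case
      by (subst if_P[OF refl]) (rule genC[OF h1 h2])
  next
    case False
    have n: "((m,n,i,j) = (m',n',i',j') \<and> True \<and> True) = False"
      "((m,n,i,j) = (i',j',m',n') \<and> True \<and> (i' = m' \<and> j' = n')) = False"
      "((i,j,m,n) = (m',n',i',j') \<and> (i = m \<and> j = n) \<and> True) = False"
      "((i,j,m,n) = (i',j',m',n') \<and> (i = m \<and> j = n) \<and> (i' = m' \<and> j' = n')) = False"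
      "((i,j,m,n) = (i',j',m',n')) = False"
      using xx yy False by auto
    show ?thesis unfolding xx yy prod.case n if_False by simp
  qed
  finally show ?case .
qed



lemma onb_col: assumes v: "onb d v" and xy: "x < d" "y < d"
  shows "(\<Sum>l<d. cnj (v l x) * v l y) = (if x = y then 1 else 0)"
proof -
  define V where "V = mat d d (\<lambda>(l,x). v l x)"
  have Vc: "V \<in> carrier_mat d d" by (simp add: V_def)
  have aVc: "adj V \<in> carrier_mat d d" using Vc by simp
  have "V * adj V = 1\<^sub>m d"
    by (rule eq_matI) (auto simp: V_def scalar_prod_def atLeast0LessThan onb_sum'[OF v])
  hence "adj V * V = 1\<^sub>m d" using mat_mult_left_right_inverse[OF Vc aVc] by simp
  hence "(adj V * V) $$ (x,y) = 1\<^sub>m d $$ (x,y)" by simp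
  thus ?thesis using xy by (simp add: V_def scalar_prod_def atLeast0LessThan)
qed

lemma hf_row: assumes u: "onb d u" and v: "onb d v" and i: "i < d"
  shows "(\<Sum>j<d. (cmod (hf d u v i j))^2) = 1"
proof -
  have e1: "hf d u v i j * cnj (hf d u v i j) = (\<Sum>x<d. \<Sum>y<d. (cnj (u i x) * u i y) * (cnj (v j x) * v j y))" for j
  proof -
    have "(\<Sum>x<d. \<Sum>y<d. (cnj (u i x) * u i y) * (cnj (v j x) * v j y)) = 1 * ((\<Sum>x<d. cnj (u i x) * cnj (v j x)) * (\<Sum>y<d. u i y * v j y))"
      by (rule fact2) (simp add: mult_ac)
    thus ?thesis by (simp add: hf_def)
  qed
  have "(\<Sum>j<d. hf d u v i j * cnj (hf d u v i j)) = (\<Sum>j<d. \<Sum>x<d. \<Sum>y<d. (cnj (u i x) * u i y) * (cnj (v j x) * v j y))"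
    by (simp add: e1)
  also have "\<dots> = (\<Sum>x<d. \<Sum>y<d. \<Sum>j<d. (cnj (u i x) * u i y) * (cnj (v j x) * v j y))"
    by (subst sum.swap) (subst (2) sum.swap, rule refl)
  also have "\<dots> = (\<Sum>x<d. \<Sum>y<d. (cnj (u i x) * u i y) * (if x = y then 1 else 0))"
    by (intro sum.cong refl) (simp add: sum_distrib_left[symmetric] onb_col[OF v])
  also have "\<dots> = (\<Sum>x<d. cnj (u i x) * u i x)"
    by (simp add: ifs cong: if_cong)
  also have "\<dots> = 1" using onb_sum[OF u i i] by simp
  finally have "(\<Sum>j<d. hf d u v i j * cnj (hf d u v i j)) = 1" .
  moreover have "complex_of_real (\<Sum>j<d. (cmod (hf d u v i j))^2) = (\<Sum>j<d. hf d u v i j * cnj (hf d u v i j))"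
    by (simp only: of_real_sum complex_norm_square)
  ultimately have "complex_of_real (\<Sum>j<d. (cmod (hf d u v i j))^2) = 1" by simp
  thus ?thesis by (metis of_real_1 of_real_eq_iff)
qed



lemma traceAB_sum:
  fixes a :: "nat \<Rightarrow> nat \<Rightarrow> real" and g b :: real
  assumes a0: "\<And>i j. a i j \<ge> 0" and row: "\<And>i. i < d \<Longrightarrow> (\<Sum>j<d. (a i j)^2) = 1"
    and gb: "g + b \<ge> 0" and b0: "b \<ge> 0" and one: "real d * g + (real d)^2 * b = 1"
  shows "(\<Sum>i<d. \<Sum>j<d. \<Sum>m<d. \<Sum>n<d. \<bar>g * a m n * a i j + b * (if i = m \<and> j = n then 1 else 0)\<bar>)
     = 1 + \<bar>g\<bar> * ((\<Sum>i<d. \<Sum>j<d. a i j)^2 - real d)"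
proof -
  have le1: "a i j \<le> 1" if "i < d" "j < d" for i j
  proof -
    have "(a i j)^2 \<le> (\<Sum>j<d. (a i j)^2)"
      by (rule member_le_sum[where f="\<lambda>j. (a i j)^2"]) (use that in auto)
    hence "(a i j)^2 \<le> 1" using row that by simp
    thus ?thesis using a0[of i j] by (simp add: power_le_one_iff abs_square_le_1)
  qed
  have pos: "g * (a i j)^2 + b \<ge> 0" if "i < d" "j < d" for i j
  proof (cases "g \<ge> 0")
    case True thus ?thesis using b0 by simp
  next
    case False
    have "(a i j)^2 \<le> 1" using le1[OF that] a0[of i j] by (simp add: power_le_one)
    hence "g * (a i j)^2 \<ge> g * 1" using False by (intro mult_left_mono_neg) auto
    thus ?thesis using gb by simp
  qed
  have pt: "\<bar>g * a m n * a i j + b * (if i = m \<and> j = n then 1 else 0)\<bar>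
      = \<bar>g\<bar> * (a i j * a m n) + (if n = j then (if m = i then g * (a i j)^2 + b - \<bar>g\<bar> * (a i j)^2 else 0) else 0)"
    if "i < d" "j < d" for i j m n
  proof (cases "i = m \<and> j = n")
    case True
    hence "m = i" "n = j" by auto
    thus ?thesis using pos[OF that] by (simp add: power2_eq_square)
  next
    case False
    have "\<bar>g * a m n * a i j\<bar> = \<bar>g\<bar> * (a i j * a m n)" using a0[of m n] a0[of i j] by (simp add: abs_mult)
    thus ?thesis using False by auto
  qed
  have "(\<Sum>i<d. \<Sum>j<d. \<Sum>m<d. \<Sum>n<d. \<bar>g * a m n * a i j + b * (if i = m \<and> j = n then 1 else 0)\<bar>)
     = (\<Sum>i<d. \<Sum>j<d. \<Sum>m<d. \<Sum>n<d. \<bar>g\<bar> * (a i j * a m n) + (if n = j then (if m = i then g * (a i j)^2 + b - \<bar>g\<bar> * (a i j)^2 else 0) else 0))"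
    by (intro sum.cong refl) (rule pt, auto)
  also have "\<dots> = (\<Sum>i<d. \<Sum>j<d. \<Sum>m<d. \<Sum>n<d. \<bar>g\<bar> * (a i j * a m n)) + (\<Sum>i<d. \<Sum>j<d. g * (a i j)^2 + b - \<bar>g\<bar> * (a i j)^2)"
    by (simp add: sum.distrib sum.delta sum.delta' cong: if_cong)
  also have "(\<Sum>i<d. \<Sum>j<d. \<Sum>m<d. \<Sum>n<d. \<bar>g\<bar> * (a i j * a m n)) = \<bar>g\<bar> * (\<Sum>i<d. \<Sum>j<d. a i j)^2"
  proof -
    have "(\<Sum>i<d. \<Sum>j<d. \<Sum>m<d. \<Sum>n<d. \<bar>g\<bar> * (a i j * a m n)) = \<bar>g\<bar> * (\<Sum>i<d. \<Sum>j<d. a i j * (\<Sum>m<d. \<Sum>n<d. a m n))"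
      by (simp add: sum_distrib_left)
    also have "\<dots> = \<bar>g\<bar> * ((\<Sum>i<d. \<Sum>j<d. a i j) * (\<Sum>m<d. \<Sum>n<d. a m n))"
      by (simp add: sum_distrib_right)
    finally show ?thesis by (simp add: power2_eq_square)
  qed
  also have "(\<Sum>i<d. \<Sum>j<d. g * (a i j)^2 + b - \<bar>g\<bar> * (a i j)^2) = (\<Sum>i<d. g * (\<Sum>j<d. (a i j)^2) + real d * b - \<bar>g\<bar> * (\<Sum>j<d. (a i j)^2))"
    by (simp add: sum.distrib sum_subtractf sum_distrib_left)
  also have "\<dots> = (\<Sum>i<d. g + real d * b - \<bar>g\<bar>)"
    by (intro sum.cong refl) (simp add: row)
  also have "\<dots> = real d * g + (real d)^2 * b - real d * \<bar>g\<bar>"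
    by (simp add: algebra_simps power2_eq_square)
  finally show ?thesis using one by (simp add: algebra_simps)
qed

lemma params:
  assumes d: "d \<ge> 2" and p: "0 \<le> p" "p \<le> 1"
  shows "tt d p \<ge> 0" "(p - tt d p) / real d + tt d p \<ge> 0"
    "real d * ((p - tt d p) / real d) + (real d)^2 * tt d p = 1"
    "\<bar>(p - tt d p) / real d\<bar> * ((real d)^2 - real d) / 2 = \<bar>p * real d ^ 2 - 1\<bar> / (2 * (real d + 1))"
proof -
  define b where "b = tt d p"
  define g where "g = (p - b) / d"
  have d0: "d > 0" using d by simp
  have dr: "real d \<ge> 2" using d by simp
  have dd: "real d * real d \<ge> 2 * 2" using dr by (intro mult_mono) auto
  have q: "real d ^ 2 - 1 > 0" using dd by (simp add: power2_eq_square)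
  have b0: "b \<ge> 0" unfolding b_def using p q by simp
  have hb: "(real d ^ 2 - 1) * b = 1 - p" unfolding b_def using q by simp
  have e1: "real d * ((p - b) / real d) = p - b" using d0 by simp
  have gb: "g + b = p / d + b * (1 - 1 / d)" unfolding g_def by (simp add: diff_divide_distrib right_diff_distrib)
  have gb0: "g + b \<ge> 0" unfolding gb using p b0 dr by (intro add_nonneg_nonneg mult_nonneg_nonneg) auto
  have "real d * g + (real d)^2 * b = (p - b) + (real d ^ 2) * b"
    unfolding g_def using e1 by simp
  also have "\<dots> = p + (real d ^ 2 - 1) * b" by (simp add: algebra_simps)
  also have "\<dots> = 1" using hb by simp
  finally have one: "real d * g + (real d)^2 * b = 1" .
  have pb: "p - b = (p * real d ^ 2 - 1) / (real d ^ 2 - 1)"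
  proof -
    have "(p - b) * (real d ^ 2 - 1) = p * real d ^ 2 - 1" using hb by (simp add: algebra_simps)
    thus ?thesis using q by (simp add: eq_divide_eq)
  qed
  have gv: "g = (p * real d ^ 2 - 1) / ((real d ^ 2 - 1) * real d)"
    unfolding g_def pb by simp
  have f: "real d ^ 2 - 1 = (real d - 1) * (real d + 1)" by (simp add: algebra_simps power2_eq_square)
  have ga: "\<bar>g\<bar> = \<bar>p * real d ^ 2 - 1\<bar> / ((real d ^ 2 - 1) * real d)"
    unfolding gv using q d0 by (simp add: abs_divide abs_mult)
  have f2: "(real d)^2 - real d = real d * (real d - 1)" by (simp add: algebra_simps power2_eq_square)
  have key: "\<And>X. X / ((real d - 1) * (real d + 1) * real d) * (real d * (real d - 1)) / 2 = X / (2 * (real d + 1))"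
    using dr by simp
  show "tt d p \<ge> 0" using b0 b_def by simp
  show "(p - tt d p) / real d + tt d p \<ge> 0" using gb0 unfolding g_def b_def .
  show "real d * ((p - tt d p) / real d) + (real d)^2 * tt d p = 1" using one unfolding g_def b_def .
  show "\<bar>(p - tt d p) / real d\<bar> * ((real d)^2 - real d) / 2 = \<bar>p * real d ^ 2 - 1\<bar> / (2 * (real d + 1))"
    using ga unfolding g_def b_def f f2 by (simp only: key)
qed

lemma negAB:
  assumes u: "onb d u" and v: "onb d v" and d: "d \<ge> 2" and p: "0 \<le> p" "p \<le> 1"
  shows "negativity (d*d) (d*d) (VAB d u v * isotropic d p * adj (VAB d u v))
     = \<bar>(p - tt d p) / real d\<bar> * ((\<Sum>i<d. \<Sum>j<d. cmod (hf d u v i j))^2 - real d) / 2"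
proof -
  have d0: "d > 0" using d by simp
  define b where "b = tt d p"
  define g where "g = (p - b) / d"
  define H where "H = hf d u v"
  define cf where "cf x = (case x of (i,j,m,n) \<Rightarrow> g * cmod (H m n) * cmod (H i j) + b * (if i = m \<and> j = n then 1 else 0))" for x :: q4
  define c where "c r = \<bar>cf (dec4 d r)\<bar>" for r
  let ?M = "ptrans (d*d) (d*d) (VAB d u v * isotropic d p * adj (VAB d u v))"
  have Mc: "?M \<in> carrier_mat (d*d*d*d) (d*d*d*d)" by (simp add: ptrans_def mult.assoc)
  have Wc: "W4 d u v \<in> carrier_mat (d*d*d*d) (d*d*d*d)" by (simp add: W4_def)
  have M': "adj (W4 d u v) * ?M * W4 d u v = mat4 d (MpBf (complex_of_real g) (complex_of_real b) H)"
    using MpAB[OF u v d0, of p] unfolding g_def b_def H_def by simp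
  have lam: "(\<lambda>(i,j,m,n) y. if (i,j,m,n) = y then complex_of_real ((g * cmod (H m n) * cmod (H i j) + b * (if i = m \<and> j = n then 1 else 0))^2) else 0)
     = (\<lambda>x y. if x = y then complex_of_real ((cf x)^2) else 0)"
    by (intro ext) (auto simp: cf_def split: prod.splits)
  have D: "adj (adj (W4 d u v) * ?M * W4 d u v) * (adj (W4 d u v) * ?M * W4 d u v)
     = mat (d*d*d*d) (d*d*d*d) (\<lambda>(r,s). if r = s then complex_of_real ((c r)^2) else 0)"
    unfolding M' MpB_sq lam mat4_diag c_def power2_abs ..
  have "trace_norm ?M = (\<Sum>r<d*d*d*d. c r)"
    by (rule trace_norm_diag[OF Mc Wc W4_unitary[OF u v] D]) (simp add: c_def)
  also have "\<dots> = (\<Sum>i<d. \<Sum>j<d. \<Sum>m<d. \<Sum>n<d. \<bar>g * cmod (H m n) * cmod (H i j) + b * (if i = m \<and> j = n then 1 else 0)\<bar>)"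
    unfolding c_def using sum4[of "\<lambda>x. \<bar>cf x\<bar>" d] by (simp add: cf_def)
  also have "\<dots> = 1 + \<bar>g\<bar> * ((\<Sum>i<d. \<Sum>j<d. cmod (H i j))^2 - real d)"
    by (rule traceAB_sum) (use hf_row[OF u v] params[OF d p] in \<open>auto simp: H_def g_def b_def\<close>)
  finally have "trace_norm ?M = 1 + \<bar>g\<bar> * ((\<Sum>i<d. \<Sum>j<d. cmod (H i j))^2 - real d)" .
  thus ?thesis by (simp add: negativity_def g_def b_def H_def)
qed



lemma S_ge: assumes u: "onb d u" and v: "onb d v"
  shows "real d \<le> (\<Sum>i<d. \<Sum>j<d. cmod (hf d u v i j))"
proof -
  have "real d = (\<Sum>i<d. \<Sum>j<d. (cmod (hf d u v i j))^2)" using hf_row[OF u v] by simp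
  also have "\<dots> \<le> (\<Sum>i<d. \<Sum>j<d. cmod (hf d u v i j))"
  proof (intro sum_mono)
    fix i j assume i: "i \<in> {..<d}" and j: "j \<in> {..<d}"
    have "(cmod (hf d u v i j))^2 \<le> (\<Sum>j<d. (cmod (hf d u v i j))^2)"
      by (rule member_le_sum[where f="\<lambda>j. (cmod (hf d u v i j))^2"]) (use j in auto)
    hence le: "(cmod (hf d u v i j))^2 \<le> 1" using hf_row[OF u v] i by simp
    hence "cmod (hf d u v i j) \<le> 1" by (simp add: abs_square_le_1)
    thus "(cmod (hf d u v i j))^2 \<le> cmod (hf d u v i j)"
      by (simp add: power2_eq_square mult_left_le)
  qed
  finally show ?thesis .
qed

definition ebasis :: "nat \<Rightarrow> nat \<Rightarrow> complex" where "ebasis k a = (if k = a then 1 else 0)"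

lemma onb_ebasis: "onb d ebasis"
  unfolding onb_def ebasis_def by (simp add: ifs cong: if_cong)

lemma hf_ebasis: "i < d \<Longrightarrow> j < d \<Longrightarrow> hf d ebasis ebasis i j = (if i = j then 1 else 0)"
  unfolding hf_def ebasis_def by (cases "i = j") (simp_all add: ifs cong: if_cong)

lemma S_ebasis: "(\<Sum>i<d. \<Sum>j<d. cmod (hf d ebasis ebasis i j)) = real d"
proof -
  have "(\<Sum>i<d. \<Sum>j<d. cmod (hf d ebasis ebasis i j)) = (\<Sum>i<d. \<Sum>j<d. if i = j then 1 else 0)"
    by (intro sum.cong refl) (simp add: hf_ebasis)
  also have "\<dots> = real d" by simp
  finally show ?thesis .
qed

theorem theorem14:
  fixes d :: nat and p :: real
  assumes "d \<ge> 2" and "0 \<le> p" and "p \<le> 1"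
  shows "Q_A d (isotropic d p) = \<bar>p * real d ^ 2 - 1\<bar> / (2 * (real d + 1))
       \<and> Q_AB d (isotropic d p) = \<bar>p * real d ^ 2 - 1\<bar> / (2 * (real d + 1))"
proof
  define V where "V = \<bar>p * real d ^ 2 - 1\<bar> / (2 * (real d + 1))"
  define g where "g = (p - tt d p) / real d"
  have d0: "d > 0" using assms by simp
  have img: "(\<lambda>u. negativity (d*d) d (VA d u * isotropic d p * adj (VA d u))) ` {u. onb d u} = {V}"
    using negA[OF _ assms] onb_ebasis unfolding V_def by force
  show "Q_A d (isotropic d p) = \<bar>p * real d ^ 2 - 1\<bar> / (2 * (real d + 1))"
    unfolding Q_A_def img V_def by simp
  have vAB: "negativity (d*d) (d*d) (VAB d u v * isotropic d p * adj (VAB d u v)) \<ge> V"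
    if u: "onb d u" and v: "onb d v" for u v
  proof -
    have Sd: "real d \<le> (\<Sum>i<d. \<Sum>j<d. cmod (hf d u v i j))" by (rule S_ge[OF u v])
    have "(real d)^2 \<le> (\<Sum>i<d. \<Sum>j<d. cmod (hf d u v i j))^2"
      using Sd by (intro power_mono) auto
    hence "\<bar>g\<bar> * ((real d)^2 - real d) / 2 \<le> \<bar>g\<bar> * ((\<Sum>i<d. \<Sum>j<d. cmod (hf d u v i j))^2 - real d) / 2"
      by (intro divide_right_mono mult_left_mono) auto
    thus ?thesis unfolding negAB[OF u v assms] V_def params(4)[OF assms, symmetric] g_def .
  qed
  have vE: "negativity (d*d) (d*d) (VAB d ebasis ebasis * isotropic d p * adj (VAB d ebasis ebasis)) = V"
    unfolding negAB[OF onb_ebasis onb_ebasis assms] S_ebasis V_def params(4)[OF assms, symmetric] by (simp add: power2_eq_square)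
  show "Q_AB d (isotropic d p) = \<bar>p * real d ^ 2 - 1\<bar> / (2 * (real d + 1))"
    unfolding Q_AB_def V_def[symmetric]
  proof (rule cInf_eq_minimum)
    show "V \<in> (\<lambda>uv. negativity (d*d) (d*d) (VAB d (fst uv) (snd uv) * isotropic d p * adj (VAB d (fst uv) (snd uv)))) ` {(u,v). onb d u \<and> onb d v}"
      using vE onb_ebasis by (intro image_eqI[where x="(ebasis, ebasis)"]) auto
  next
    fix x assume "x \<in> (\<lambda>uv. negativity (d*d) (d*d) (VAB d (fst uv) (snd uv) * isotropic d p * adj (VAB d (fst uv) (snd uv)))) ` {(u,v). onb d u \<and> onb d v}"
    then obtain u v where "onb d u" "onb d v" "x = negativity (d*d) (d*d) (VAB d u v * isotropic d p * adj (VAB d u v))" by auto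
    thus "V \<le> x" using vAB by simp
  qed
qed

end
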